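(* Let $\Omega\subset\mathbb{R}^n$ be a convex polytope with non-empty interior. Then the function $\varepsilon\mapsto\mathrm{vol}(L_\varepsilon(\Omega))$ on $[0,\mathrm{In}(\Omega)]$ is continuously differentiable with a decreasing derivative; consequently it is concave, and $$\mathrm{vol}(L_\varepsilon(\Omega))\ge \varepsilon\,\frac{\mathrm{vol}(\Omega)}{\mathrm{In}(\Omega)}\ge \frac{g(\varepsilon)}{n}$$ for all $\varepsilon\in[0,\mathrm{In}(\Omega)]$, where $g(\varepsilon)=\mathrm{vol}(\Omega)\left(1-\big(1-\frac{\varepsilon}{\mathrm{In}(\Omega)}\big)^{n}\right)$.
   Context: $\mathrm{vol}$ is $n$-dimensional Lebesgue measure. $\mathrm{In}(\Omega)$ is the inradius of $\Omega$: the radius of the largest ball contained in $\Omega$. The $\varepsilon$-inner neighbourhood is $L_\varepsilon(\Omega)=\{x\in\Omega:\|x-y\|\le\varepsilon\text{ for some }y\in\partial\Omega\}$. *)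

theory Defs
  imports "HOL-Analysis.Analysis"
begin

definition vol :: "'a::euclidean_space set \<Rightarrow> real" where
  "vol S = measure lebesgue S"

definition inradius :: "'a::euclidean_space set \<Rightarrow> real" where
  "inradius S = Sup {r. r \<ge> 0 \<and> (\<exists>x. cball x r \<subseteq> S)}"

definition inner_nbhd :: "real \<Rightarrow> 'a::euclidean_space set \<Rightarrow> 'a set" where
  "inner_nbhd \<epsilon> S = {x \<in> S. \<exists>y \<in> frontier S. dist x y \<le> \<epsilon>}"

end

theory Submission
  imports Defs
begin

lemma midconcave_chord:
  fixes \<phi> :: "real \<Rightarrow> real"
  assumes cont: "continuous_on {x..z} \<phi>"
    and mid: "\<And>s r. x \<le> s \<Longrightarrow> s \<le> r \<Longrightarrow> r \<le> z \<Longrightarrow> \<phi> s + \<phi> r \<le> 2 * \<phi> ((s+r)/2)"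
    and xz: "x < z" and y: "x \<le> y" "y \<le> z"
  shows "\<phi> x + (\<phi> z - \<phi> x) * (y - x) / (z - x) \<le> \<phi> y"
proof (rule ccontr)
  assume neg: "\<not> ?thesis"
  define c where "c = (\<phi> z - \<phi> x) / (z - x)"
  define \<psi> where "\<psi> s = \<phi> s - \<phi> x - c * (s - x)" for s
  have cpsi: "continuous_on {x..z} \<psi>" unfolding \<psi>_def
    by (intro continuous_intros cont)
  have midpsi: "\<psi> s + \<psi> r \<le> 2 * \<psi> ((s+r)/2)" if "x \<le> s" "s \<le> r" "r \<le> z" for s r
  proof -
    have "\<psi> s + \<psi> r - 2 * \<psi> ((s+r)/2) = \<phi> s + \<phi> r - 2 * \<phi> ((s+r)/2)"
      unfolding \<psi>_def by (simp add: algebra_simps)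
    then show ?thesis using mid[OF that] by linarith
  qed
  have psiy: "\<psi> y < 0" using neg unfolding \<psi>_def c_def by (simp add: algebra_simps)
  have psix: "\<psi> x = 0" and psiz: "\<psi> z = 0" unfolding \<psi>_def c_def using xz by auto
  obtain w where w: "w \<in> {x..z}" "\<And>v. v \<in> {x..z} \<Longrightarrow> \<psi> w \<le> \<psi> v"
    using continuous_attains_inf[OF compact_Icc _ cpsi] xz by fastforce
  define m where "m = \<psi> w"
  define M where "M = {s \<in> {x..z}. \<psi> s = m}"
  have Mcl: "closed M" unfolding M_def by (rule continuous_closed_preimage_constant[OF cpsi]) auto
  have Mne: "M \<noteq> {}" using w unfolding M_def m_def by auto
  have Mbdd: "bdd_below M" unfolding M_def by (rule bdd_belowI[of _ x]) auto
  define s0 where "s0 = Inf M"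
  have s0M: "s0 \<in> M" unfolding s0_def by (rule closed_contains_Inf[OF Mne Mbdd Mcl])
  have mle: "m \<le> \<psi> v" if "v \<in> {x..z}" for v using w(2)[OF that] m_def by simp
  have mneg: "m < 0" using mle[of y] y psiy by auto
  have s0x: "s0 \<noteq> x" using s0M psix mneg unfolding M_def by auto
  have s0z: "s0 \<noteq> z" using s0M psiz mneg unfolding M_def by auto
  have s0r: "x < s0" "s0 < z" using s0M s0x s0z unfolding M_def by auto
  define d where "d = min (s0 - x) (z - s0)"
  have d: "d > 0" "x \<le> s0 - d" "s0 + d \<le> z" using s0r unfolding d_def by auto
  have "\<psi> (s0 - d) + \<psi> (s0 + d) \<le> 2 * \<psi> s0"
    using midpsi[of "s0 - d" "s0 + d"] d by simp
  moreover have "\<psi> (s0 + d) \<ge> m" using mle d s0r by auto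
  moreover have "\<psi> (s0 - d) > m"
  proof -
    have "\<psi> (s0 - d) \<ge> m" using mle d s0r by auto
    moreover have "\<psi> (s0 - d) \<noteq> m"
    proof
      assume "\<psi> (s0 - d) = m"
      then have "s0 - d \<in> M" unfolding M_def using d s0r by auto
      then have "s0 \<le> s0 - d" unfolding s0_def by (rule cInf_lower[OF _ Mbdd])
      then show False using d by simp
    qed
    ultimately show ?thesis by simp
  qed
  moreover have "\<psi> s0 = m" using s0M unfolding M_def by simp
  ultimately show False by simp
qed

lemma midconcave_imp_concave:
  fixes \<phi> :: "real \<Rightarrow> real"
  assumes cont: "continuous_on {a..b} \<phi>"
    and mid: "\<And>s r. a \<le> s \<Longrightarrow> s \<le> r \<Longrightarrow> r \<le> b \<Longrightarrow> \<phi> s + \<phi> r \<le> 2 * \<phi> ((s+r)/2)"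
  shows "concave_on {a..b} \<phi>"
proof -
  have key: "u * \<phi> X + v * \<phi> Y \<le> \<phi> (u * X + v * Y)"
    if XY: "X \<in> {a..b}" "Y \<in> {a..b}" "X < Y" and uv: "u \<ge> 0" "v \<ge> 0" "u + v = 1" for X Y u v
  proof -
    have c: "continuous_on {X..Y} \<phi>" using cont by (rule continuous_on_subset) (use XY in auto)
    have "\<phi> X + (\<phi> Y - \<phi> X) * ((u * X + v * Y) - X) / (Y - X) \<le> \<phi> (u * X + v * Y)"
    proof (rule midconcave_chord[OF c])
      show "\<phi> s + \<phi> r \<le> 2 * \<phi> ((s + r) / 2)" if "X \<le> s" "s \<le> r" "r \<le> Y" for s r
        using mid[of s r] that XY by auto
      have e1: "u * X + v * Y = X + v * (Y - X)" using uv
        by (metis add.commute add_diff_cancel_left' diff_add_eq mult.commute mult_1 right_diff_distrib' distrib_right)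
      have "0 \<le> v * (Y - X)" "v * (Y - X) \<le> Y - X" using uv XY
        by (auto intro: mult_nonneg_nonneg)
      then show "X \<le> u * X + v * Y" "u * X + v * Y \<le> Y" using e1 by auto
    qed (use XY in auto)
    moreover have "\<phi> X + (\<phi> Y - \<phi> X) * ((u * X + v * Y) - X) / (Y - X) = u * \<phi> X + v * \<phi> Y"
    proof -
      have "(u * X + v * Y) - X = v * (Y - X)" using uv
        by (metis add.commute add_diff_cancel_left' diff_add_eq mult.commute mult_1 right_diff_distrib' distrib_right)
      then have "\<phi> X + (\<phi> Y - \<phi> X) * ((u * X + v * Y) - X) / (Y - X) = \<phi> X + (\<phi> Y - \<phi> X) * v"
        using XY by simp
      also have "\<dots> = u * \<phi> X + v * \<phi> Y" 
      proof -
        have "\<phi> X = (u + v) * \<phi> X" using uv(3) by simp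
        then show ?thesis by (simp add: algebra_simps)
      qed
      finally show ?thesis .
    qed
    ultimately show ?thesis by simp
  qed
  show ?thesis unfolding concave_on_iff
  proof (intro conjI ballI allI impI)
    show "convex {a..b}" by simp
    fix X Y u v :: real assume XY: "X \<in> {a..b}" "Y \<in> {a..b}" and uv: "0 \<le> u" "0 \<le> v" "u + v = 1"
    consider "X < Y" | "X = Y" | "Y < X" by linarith
    then show "u * \<phi> X + v * \<phi> Y \<le> \<phi> (u *\<^sub>R X + v *\<^sub>R Y)"
    proof cases
      case 1 then show ?thesis using key[OF XY 1 uv] by simp
    next
      case 2
      have "u *\<^sub>R X + v *\<^sub>R Y = X" using 2 uv by (metis scaleR_add_left scaleR_one)
      then show ?thesis using 2 uv by (metis distrib_right mult_1 order_refl)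
    next
      case 3 then show ?thesis using key[OF XY(2,1) 3 uv(2,1)] uv by (simp add: algebra_simps)
    qed
  qed
qed


lemma slope3:
  fixes F :: "real \<Rightarrow> real"
  assumes cc: "concave_on S F" and I: "x \<in> S" "y \<in> S" and t: "x < t" "t < y"
  shows "(F y - F x) / (y - x) \<le> (F t - F x) / (t - x)"
    and "(F y - F t) / (y - t) \<le> (F y - F x) / (y - x)"
proof -
  have cv: "convex_on S (\<lambda>x. - F x)" using cc by (simp add: concave_on_def)
  note a = convex_on_slope_le[OF cv I t]
  have e1: "(- F x - - F t) / (x - t) = - ((F t - F x) / (t - x))"
    by (simp add: field_simps) (metis minus_diff_eq divide_minus_right minus_divide_left)
  have e2: "(- F x - - F y) / (x - y) = - ((F y - F x) / (y - x))"
    by (metis minus_diff_eq divide_minus_right minus_divide_left diff_minus_eq_add add.commute uminus_add_conv_diff)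
  have e3: "(- F t - - F y) / (t - y) = - ((F y - F t) / (y - t))"
    by (metis minus_diff_eq divide_minus_right minus_divide_left diff_minus_eq_add add.commute uminus_add_conv_diff)
  show "(F y - F x) / (y - x) \<le> (F t - F x) / (t - x)" using a(1) e1 e2 by simp
  show "(F y - F t) / (y - t) \<le> (F y - F x) / (y - x)" using a(2) e2 e3 by simp
qed


lemma analysis_main:
  fixes F :: "real \<Rightarrow> real" and In K1 :: real
  assumes In: "In > 0"
  and mono: "\<And>s t. 0 \<le> s \<Longrightarrow> s \<le> t \<Longrightarrow> t \<le> In \<Longrightarrow> F s \<le> F t"
  and P1: "\<And>t t' \<delta>. 0 \<le> t \<Longrightarrow> t \<le> t' \<Longrightarrow> 0 \<le> \<delta> \<Longrightarrow> t' + \<delta> \<le> In \<Longrightarrow> F (t'+\<delta>) - F t' \<le> F (t+\<delta>) - F t"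
  and P3: "\<And>\<delta>. 0 \<le> \<delta> \<Longrightarrow> \<delta> \<le> In \<Longrightarrow> F \<delta> - F 0 \<le> K1 * \<delta>"
  and P2: "\<And>t. 0 < t \<Longrightarrow> t < In \<Longrightarrow> \<exists>K d. d > 0 \<and> (\<forall>\<delta>. 0 < \<delta> \<and> \<delta> < d \<longrightarrow> F t - F (t-\<delta>) \<le> F (t+\<delta>) - F t + K * \<delta>^2)"
  shows "(\<exists>f'. (\<forall>\<epsilon>\<in>{0..In}. (F has_real_derivative f' \<epsilon>) (at \<epsilon> within {0..In}))
           \<and> continuous_on {0..In} f'
           \<and> (\<forall>s\<in>{0..In}. \<forall>t\<in>{0..In}. s \<le> t \<longrightarrow> f' t \<le> f' s))
         \<and> concave_on {0..In} F"
proof -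
  have lip: "F t - F s \<le> K1 * (t - s)" if "0 \<le> s" "s \<le> t" "t \<le> In" for s t
    using P1[of 0 s "t - s"] P3[of "t-s"] that by simp
  have K1: "K1 \<ge> 0"
  proof -
    have "0 \<le> K1 * In" using P3[of In] mono[of 0 In] In by simp
    then show ?thesis using In by (simp add: zero_le_mult_iff)
  qed
  have lipabs: "\<bar>F y - F x\<bar> \<le> K1 * \<bar>y - x\<bar>" if "x \<in> {0..In}" "y \<in> {0..In}" for x y
  proof (cases "x \<le> y")
    case True then show ?thesis using lip[of x y] mono[of x y] that by auto
  next
    case False then show ?thesis using lip[of y x] mono[of y x] that by auto
  qed
  have cont: "continuous_on {0..In} F"
    unfolding continuous_on_iff
  proof (intro ballI allI impI)
    fix x e :: real assume x: "x \<in> {0..In}" and e: "0 < e"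
    show "\<exists>d>0. \<forall>x'\<in>{0..In}. dist x' x < d \<longrightarrow> dist (F x') (F x) < e"
    proof (intro exI[of _ "e / (K1 + 1)"] conjI ballI impI)
      show "0 < e / (K1 + 1)" using e K1 by simp
      fix x' assume x': "x' \<in> {0..In}" and d: "dist x' x < e / (K1 + 1)"
      have "\<bar>F x' - F x\<bar> \<le> K1 * \<bar>x' - x\<bar>" using lipabs x x' by simp
      also have "\<dots> \<le> (K1 + 1) * \<bar>x' - x\<bar>" by (simp add: mult_right_mono)
      also have "\<dots> < (K1 + 1) * (e / (K1 + 1))" using d K1 by (intro mult_strict_left_mono) (auto simp: dist_real_def)
      also have "\<dots> = e" using K1 by simp
      finally show "dist (F x') (F x) < e" by (simp add: dist_real_def)
    qed
  qed
  have cc: "concave_on {0..In} F"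
  proof (rule midconcave_imp_concave[OF cont])
    fix s r assume sr: "0 \<le> s" "s \<le> r" "r \<le> In"
    have "F ((s+r)/2 + (r-s)/2) - F ((s+r)/2) \<le> F (s + (r-s)/2) - F s"
      by (rule P1) (use sr in \<open>auto simp: field_simps\<close>)
    moreover have "(s+r)/2 + (r-s)/2 = r" "s + (r-s)/2 = (s+r)/2" by (simp_all add: field_simps)
    ultimately show "F s + F r \<le> 2 * F ((s + r) / 2)" by simp
  qed
  define sl where "sl a b = (F b - F a) / (b - a)" for a b
  have sl3a: "sl x y \<le> sl x t" if "0 \<le> x" "y \<le> In" "x < t" "t < y" for x y t
    unfolding sl_def by (rule slope3(1)[OF cc]) (use that in auto)
  have sl3b: "sl t y \<le> sl x y" if "0 \<le> x" "y \<le> In" "x < t" "t < y" for x y t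
    unfolding sl_def by (rule slope3(2)[OF cc]) (use that in auto)
  have slK: "sl a b \<le> K1" if "0 \<le> a" "a < b" "b \<le> In" for a b
    using lip[of a b] that unfolding sl_def by (simp add: divide_le_eq)
  have sl0: "0 \<le> sl a b" if "0 \<le> a" "a < b" "b \<le> In" for a b
    using mono[of a b] that unfolding sl_def by simp
  define D where "D t = (if t < In then Sup ((sl t) ` {t<..In}) else Inf ((\<lambda>s. sl s In) ` {0..<In}))" for t
  have DR: "sl t r \<le> D t" if "0 \<le> t" "t < r" "r \<le> In" for t r
  proof -
    have b: "bdd_above ((sl t) ` {t<..In})" using slK that by (intro bdd_aboveI[of _ K1]) auto
    have "sl t r \<le> Sup ((sl t) ` {t<..In})" using cSup_upper[OF _ b, of "sl t r"] that by auto
    then show ?thesis unfolding D_def using that by auto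
  qed
  have DL: "D t \<le> sl s t" if "0 \<le> s" "s < t" "t \<le> In" for s t
  proof (cases "t < In")
    case True
    have "Sup ((sl t) ` {t<..In}) \<le> sl s t"
    proof (rule cSup_least)
      show "sl t ` {t<..In} \<noteq> {}" using True by auto
      fix x assume "x \<in> sl t ` {t<..In}"
      then obtain r where r: "t < r" "r \<le> In" "x = sl t r" by auto
      have "sl t r \<le> sl s r" by (rule sl3b) (use that r in auto)
      also have "\<dots> \<le> sl s t" by (rule sl3a) (use that r in auto)
      finally show "x \<le> sl s t" using r by simp
    qed
    then show ?thesis unfolding D_def using True by simp
  next
    case False
    then have tI: "t = In" using that by simp
    have b: "bdd_below ((\<lambda>s. sl s In) ` {0..<In})" using sl0 by (intro bdd_belowI[of _ 0]) auto
    have "Inf ((\<lambda>s. sl s In) ` {0..<In}) \<le> sl s In" using cInf_lower[OF _ b, of "sl s In"] that tI by auto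
    then show ?thesis unfolding D_def using tI by simp
  qed
  have ER: "\<exists>r. t < r \<and> r \<le> In \<and> D t - e < sl t r" if ER0: "0 \<le> t" "t < In" "e > 0" for t e
  proof -
    have bdd: "bdd_above ((sl t) ` {t<..In})" using slK that by (intro bdd_aboveI[of _ K1]) auto
    have "D t - e < Sup ((sl t) ` {t<..In})" using that unfolding D_def by simp
    then obtain x where "x \<in> (sl t) ` {t<..In}" "D t - e < x"
      using less_cSup_iff[OF _ bdd, of "D t - e"] ER0 by auto
    then show ?thesis by auto
  qed
  have EL: "\<exists>s. 0 \<le> s \<and> s < t \<and> sl s t < D t + e" if EL0: "0 < t" "t \<le> In" "e > 0" for t e
  proof (cases "t < In")
    case False
    then have tI: "t = In" using EL0 by simp
    have bdd: "bdd_below ((\<lambda>s. sl s In) ` {0..<In})" using sl0 by (intro bdd_belowI[of _ 0]) auto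
    have "Inf ((\<lambda>s. sl s In) ` {0..<In}) < D t + e" using EL0 tI unfolding D_def by simp
    then obtain x where "x \<in> (\<lambda>s. sl s In) ` {0..<In}" "x < D t + e"
      using cInf_less_iff[OF _ bdd, of "D t + e"] In by auto
    then show ?thesis using tI by auto
  next
    case True
    obtain K d where d: "d > 0" and Kd: "\<And>\<delta>. 0 < \<delta> \<Longrightarrow> \<delta> < d \<Longrightarrow> F t - F (t-\<delta>) \<le> F (t+\<delta>) - F t + K * \<delta>^2"
      using P2[OF EL0(1) True] by blast
    define \<delta> where "\<delta> = min (min (d/2) t) (min ((In - t)/2) (e/(2*(\<bar>K\<bar>+1))))"
    have dI: "\<delta> \<le> (In - t)/2" unfolding \<delta>_def by linarith
    have dI2: "t + \<delta> < In" using dI True by (simp add: field_simps)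
    have \<delta>: "0 < \<delta>" "\<delta> < d" "\<delta> \<le> t" "t + \<delta> < In" "\<delta> \<le> e/(2*(\<bar>K\<bar>+1))"
      using dI2 unfolding \<delta>_def using d EL0 True by auto
    have "F t - F (t-\<delta>) \<le> F (t+\<delta>) - F t + K * \<delta>^2" using Kd \<delta> by simp
    then have "(F t - F (t-\<delta>)) / \<delta> \<le> (F (t+\<delta>) - F t + K * \<delta>^2) / \<delta>"
      using \<delta> by (simp add: divide_right_mono)
    also have "\<dots> = sl t (t+\<delta>) + K * \<delta>" unfolding sl_def using \<delta> by (simp add: field_simps power2_eq_square)
    also have "\<dots> \<le> D t + \<bar>K\<bar> * \<delta>" using DR[of t "t+\<delta>"] \<delta> EL0
      by (smt (verit) abs_ge_self mult_right_mono)
    also have "\<bar>K\<bar> * \<delta> < e"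
    proof -
      have "\<bar>K\<bar> * \<delta> \<le> \<bar>K\<bar> * (e/(2*(\<bar>K\<bar>+1)))" using \<delta>(5) by (rule mult_left_mono) simp
      also have "\<dots> < e" using EL0 by (simp add: field_simps add_nonneg_pos)
      finally show ?thesis .
    qed
    finally have "sl (t - \<delta>) t < D t + e" unfolding sl_def using \<delta> by simp
    then show ?thesis using \<delta> by (intro exI[of _ "t - \<delta>"]) auto
  qed
  have deriv: "(F has_real_derivative D t) (at t within {0..In})" if t: "t \<in> {0..In}" for t
    unfolding has_field_derivative_iff tendsto_iff eventually_at
  proof (intro allI impI)
    fix e :: real assume e: "e > 0"
    obtain d1 where d1: "d1 > 0" "\<And>y. t < y \<Longrightarrow> y < t + d1 \<Longrightarrow> y \<le> In \<Longrightarrow> \<bar>sl t y - D t\<bar> < e"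
    proof (cases "t < In")
      case True
      obtain r where r: "t < r" "r \<le> In" "D t - e < sl t r" using ER[of t e] t True e by auto
      show ?thesis
      proof (rule that[of "r - t"])
        fix y assume y: "t < y" "y < t + (r - t)" "y \<le> In"
        have "sl t r \<le> sl t y" by (rule sl3a) (use t r y in auto)
        moreover have "sl t y \<le> D t" by (rule DR) (use t y in auto)
        ultimately show "\<bar>sl t y - D t\<bar> < e" using r by auto
      qed (use r in auto)
    next
      case False then show ?thesis using that[of 1] t by auto
    qed
    obtain d2 where d2: "d2 > 0" "\<And>y. t - d2 < y \<Longrightarrow> y < t \<Longrightarrow> 0 \<le> y \<Longrightarrow> \<bar>sl y t - D t\<bar> < e"
    proof (cases "0 < t")
      case True
      obtain s where s: "0 \<le> s" "s < t" "sl s t < D t + e" using EL[of t e] t True e by auto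
      show ?thesis
      proof (rule that[of "t - s"])
        fix y assume y: "t - (t - s) < y" "y < t" "0 \<le> y"
        have "D t \<le> sl y t" by (rule DL) (use t y in auto)
        moreover have "sl y t \<le> sl s t" by (rule sl3b) (use t s y in auto)
        ultimately show "\<bar>sl y t - D t\<bar> < e" using s by auto
      qed (use s in auto)
    next
      case False then show ?thesis using that[of 1] t by auto
    qed
    show "\<exists>d>0. \<forall>y\<in>{0..In}. y \<noteq> t \<and> dist y t < d \<longrightarrow> dist ((F y - F t) / (y - t)) (D t) < e"
    proof (intro exI[of _ "min d1 d2"] conjI ballI impI)
      show "0 < min d1 d2" using d1 d2 by simp
      fix y assume y: "y \<in> {0..In}" "y \<noteq> t \<and> dist y t < min d1 d2"
      show "dist ((F y - F t) / (y - t)) (D t) < e"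
      proof (cases "t < y")
        case True
        have "(F y - F t) / (y - t) = sl t y" unfolding sl_def by simp
        then show ?thesis using d1(2)[of y] True y by (auto simp: dist_real_def)
      next
        case False
        then have yt: "y < t" using y by auto
        have "(F y - F t) / (y - t) = sl y t" unfolding sl_def
          by (metis minus_diff_eq divide_minus_right minus_divide_left)
        then show ?thesis using d2(2)[of y] yt y by (auto simp: dist_real_def)
      qed
    qed
  qed
  have Dmono: "D t \<le> D s" if "s \<in> {0..In}" "t \<in> {0..In}" "s \<le> t" for s t
  proof (cases "s = t")
    case False
    then have "s < t" using that by simp
    then show ?thesis using DL[of s t] DR[of s t] that by auto
  qed simp
  have Dcont: "continuous_on {0..In} D"
    unfolding continuous_on_iff
  proof (intro ballI allI impI)
    fix t e :: real assume t: "t \<in> {0..In}" and e: "0 < e"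
    obtain d1 where d1: "d1 > 0" "\<And>y. t < y \<Longrightarrow> y < t + d1 \<Longrightarrow> y \<le> In \<Longrightarrow> \<bar>D y - D t\<bar> < e"
    proof (cases "t < In")
      case True
      obtain r where r: "t < r" "r \<le> In" "D t - e/2 < sl t r" using ER[of t "e/2"] t True e by auto
      define d where "d = min ((r - t)/2) (e * (r - t) / (2 * (K1 + 1)))"
      have d: "d > 0" unfolding d_def using r e K1 by auto
      have dle: "d \<le> (r - t)/2" "d \<le> e * (r - t) / (2 * (K1 + 1))" unfolding d_def
        by (rule min.cobounded1, rule min.cobounded2)
      show ?thesis
      proof (rule that[OF d])
        fix y assume y: "t < y" "y < t + d" "y \<le> In"
        have yr: "y < r" using y dle r by auto
        have "sl t r - K1 * (y - t) / (r - t) \<le> sl y r"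
        proof -
          have A: "F r - F y \<ge> (F r - F t) - K1 * (y - t)" using lip[of t y] t y by auto
          show ?thesis
          proof (cases "(F r - F t) - K1 * (y - t) \<ge> 0")
            case True
            have "sl t r - K1 * (y - t) / (r - t) = ((F r - F t) - K1 * (y - t)) / (r - t)"
              unfolding sl_def using r by (simp add: diff_divide_distrib)
            also have "\<dots> \<le> ((F r - F t) - K1 * (y - t)) / (r - y)"
              using True yr y by (intro divide_left_mono) auto
            also have "\<dots> \<le> (F r - F y) / (r - y)" using A yr by (simp add: divide_right_mono)
            finally show ?thesis unfolding sl_def .
          next
            case False
            have "sl t r - K1 * (y - t) / (r - t) = ((F r - F t) - K1 * (y - t)) / (r - t)"
              unfolding sl_def using r by (simp add: diff_divide_distrib)
            also have "\<dots> \<le> 0" using False r by (simp add: divide_nonpos_pos)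
            also have "\<dots> \<le> sl y r" using sl0[of y r] t y yr r by simp
            finally show ?thesis .
          qed
        qed
        moreover have "K1 * (y - t) / (r - t) < e / 2"
        proof -
          have "K1 * (y - t) \<le> (K1 + 1) * (y - t)" using y by (simp add: mult_right_mono)
          also have "\<dots> < (K1 + 1) * (e * (r - t) / (2 * (K1 + 1)))"
            using y dle K1 by (intro mult_strict_left_mono) auto
          also have "\<dots> = e / 2 * (r - t)" using K1 by (simp add: field_simps)
          finally show ?thesis using r by (simp add: divide_less_eq)
        qed
        moreover have "sl y r \<le> D y" by (rule DR) (use t y yr r in auto)
        moreover have "D y \<le> D t" by (rule Dmono) (use t y in auto)
        ultimately show "\<bar>D y - D t\<bar> < e" using r by auto
      qed
    next
      case False then show ?thesis using that[of 1] t by auto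
    qed
    obtain d2 where d2: "d2 > 0" "\<And>y. t - d2 < y \<Longrightarrow> y < t \<Longrightarrow> 0 \<le> y \<Longrightarrow> \<bar>D y - D t\<bar> < e"
    proof (cases "0 < t")
      case True
      obtain s where s: "0 \<le> s" "s < t" "sl s t < D t + e/2" using EL[of t "e/2"] t True e by auto
      define d where "d = min ((t - s)/2) (e * (t - s) / (4 * (K1 + 1)))"
      have d: "d > 0" unfolding d_def using s e K1 by auto
      have dle: "d \<le> (t - s)/2" "d \<le> e * (t - s) / (4 * (K1 + 1))" unfolding d_def
        by (rule min.cobounded1, rule min.cobounded2)
      show ?thesis
      proof (rule that[OF d])
        fix y assume y: "t - d < y" "y < t" "0 \<le> y"
        have sy: "s < y" "t - y \<le> (t - s) / 2" using y dle by auto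
        have "D y \<le> sl s y" by (rule DL) (use t s sy y in auto)
        also have "sl s y \<le> (F t - F s) / (y - s)" unfolding sl_def
          using mono[of y t] sy y t by (simp add: divide_right_mono)
        also have "(F t - F s) / (y - s) = sl s t + sl s t * (t - y) / (y - s)"
        proof -
          have ne: "y - s \<noteq> 0" "t - s \<noteq> 0" using sy s by auto
          have "sl s t + sl s t * (t - y) / (y - s) = sl s t * ((y - s) + (t - y)) / (y - s)"
            using ne by (simp add: field_simps)
          also have "\<dots> = (F t - F s) / (y - s)" unfolding sl_def using ne by simp
          finally show ?thesis by simp
        qed
        also have "sl s t * (t - y) / (y - s) \<le> K1 * (t - y) / (y - s)"
          using slK[of s t] s t sy y by (intro divide_right_mono mult_right_mono) auto
        also have "K1 * (t - y) / (y - s) \<le> K1 * (t - y) / ((t - s) / 2)"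
          using sy s K1 y by (intro divide_left_mono mult_nonneg_nonneg) auto
        also have "K1 * (t - y) / ((t - s) / 2) < e / 2"
        proof -
          have "K1 * (t - y) \<le> (K1 + 1) * (t - y)" using y by (simp add: mult_right_mono)
          also have "\<dots> < (K1 + 1) * (e * (t - s) / (4 * (K1 + 1)))"
            using y dle K1 by (intro mult_strict_left_mono) auto
          also have "\<dots> = e / 2 * ((t - s) / 2)" using K1 by (simp add: field_simps)
          finally show ?thesis using s by (simp add: divide_less_eq)
        qed
        finally have "D y < sl s t + e / 2" by simp
        moreover have "D t \<le> D y" by (rule Dmono) (use t y in auto)
        ultimately show "\<bar>D y - D t\<bar> < e" using s by auto
      qed
    next
      case False then show ?thesis using that[of 1] t by auto
    qed
    show "\<exists>d>0. \<forall>y\<in>{0..In}. dist y t < d \<longrightarrow> dist (D y) (D t) < e"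
    proof (intro exI[of _ "min d1 d2"] conjI ballI impI)
      show "0 < min d1 d2" using d1 d2 by simp
      fix y assume y: "y \<in> {0..In}" "dist y t < min d1 d2"
      consider "t < y" | "y = t" | "y < t" by linarith
      then show "dist (D y) (D t) < e"
      proof cases
        case 1 then show ?thesis using d1(2)[of y] y by (auto simp: dist_real_def)
      next
        case 2 then show ?thesis using e by simp
      next
        case 3 then show ?thesis using d2(2)[of y] y by (auto simp: dist_real_def)
      qed
    qed
  qed
  show ?thesis using deriv Dcont Dmono cc by blast
qed


lemma closed_leb: "closed S \<Longrightarrow> S \<in> sets lebesgue"
  by (metis borel_closed sets_completionI_sets sets_lborel)

lemma open_leb: "open S \<Longrightarrow> S \<in> sets lebesgue"
  by (metis borel_open sets_completionI_sets sets_lborel)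

lemma tile:
  fixes S :: "'a::euclidean_space set" and f :: "'i \<Rightarrow> 'a"
  assumes S: "S \<in> lmeasurable" "S \<subseteq> cball 0 R" and I: "finite I"
    and fB: "\<And>i. i \<in> I \<Longrightarrow> norm (f i) \<le> B"
    and dj: "\<And>i j. i \<in> I \<Longrightarrow> j \<in> I \<Longrightarrow> i \<noteq> j \<Longrightarrow> ((+) (f i) ` S) \<inter> ((+) (f j) ` S) = {}"
  shows "real (card I) * measure lebesgue S \<le> measure lebesgue (cball (0::'a) (R + B))"
proof -
  have m: "(+) (f i) ` S \<in> lmeasurable" for i using measurable_translation[OF S(1)] .
  have "measure lebesgue (\<Union>i\<in>I. (+) (f i) ` S) = (\<Sum>i\<in>I. measure lebesgue ((+) (f i) ` S))"
  proof (rule measure_finite_Union[OF I])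
    show "(\<lambda>i. (+) (f i) ` S) ` I \<subseteq> sets lebesgue" using m by (auto simp: fmeasurable_def)
    show "disjoint_family_on (\<lambda>i. (+) (f i) ` S) I" using dj by (auto simp: disjoint_family_on_def)
    show "emeasure lebesgue ((+) (f i) ` S) \<noteq> \<infinity>" for i using m[of i] by (auto simp: fmeasurable_def)
  qed
  also have "\<dots> = real (card I) * measure lebesgue S" by (simp add: measure_translation)
  finally have eq: "measure lebesgue (\<Union>i\<in>I. (+) (f i) ` S) = real (card I) * measure lebesgue S" .
  have sub: "(\<Union>i\<in>I. (+) (f i) ` S) \<subseteq> cball 0 (R + B)"
  proof
    fix z assume "z \<in> (\<Union>i\<in>I. (+) (f i) ` S)"
    then obtain i y where "i \<in> I" "y \<in> S" "z = f i + y" by auto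
    then have "norm z \<le> norm (f i) + norm y" by (simp add: norm_triangle_ineq)
    also have "\<dots> \<le> B + R" using fB[OF \<open>i \<in> I\<close>] S(2) \<open>y \<in> S\<close> by auto
    finally show "z \<in> cball 0 (R + B)" by (simp add: add.commute)
  qed
  have us: "(\<Union>i\<in>I. (+) (f i) ` S) \<in> sets lebesgue"
    using m I by (intro sets.finite_UN) (auto simp: fmeasurable_def)
  have "measure lebesgue (\<Union>i\<in>I. (+) (f i) ` S) \<le> measure lebesgue (cball (0::'a) (R + B))"
    by (rule measure_mono_fmeasurable[OF sub us lmeasurable_cball])
  then show ?thesis using eq by simp
qed

lemma int_interval_eq:
  fixes k k' :: nat and \<alpha> \<delta> z :: real
  assumes "\<delta> > 0" "\<alpha> + k * \<delta> < z" "z \<le> \<alpha> + (k + 1) * \<delta>" "\<alpha> + k' * \<delta> < z" "z \<le> \<alpha> + (k' + 1) * \<delta>"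
  shows "k = k'"
proof (rule ccontr)
  have a3: "z \<le> \<alpha> + real k * \<delta> + \<delta>" "z \<le> \<alpha> + real k' * \<delta> + \<delta>" using assms(3,5) by (simp_all add: distrib_right)
  assume "k \<noteq> k'"
  then consider "k + 1 \<le> k'" | "k' + 1 \<le> k" by linarith
  then show False
  proof cases
    case 1
    then have "real (k + 1) * \<delta> \<le> real k' * \<delta>" using assms(1) by (intro mult_right_mono) auto
    then have "real k * \<delta> + \<delta> \<le> real k' * \<delta>" by (simp add: distrib_right)
    then show False using assms a3 by linarith
  next
    case 2
    then have "real (k' + 1) * \<delta> \<le> real k * \<delta>" using assms(1) by (intro mult_right_mono) auto
    then have "real k' * \<delta> + \<delta> \<le> real k * \<delta>" by (simp add: distrib_right)
    then show False using assms a3 by linarith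
  qed
qed

lemma count_bound:
  fixes \<delta> :: real assumes "0 < \<delta>" "\<delta> < 1/2"
  obtains N :: nat where "N \<ge> 1" "real N * \<delta> \<le> 1" "1 / real N \<le> 2 * \<delta>"
proof -
  define N where "N = nat \<lfloor>1/\<delta>\<rfloor>"
  have f1: "real_of_int \<lfloor>1/\<delta>\<rfloor> \<le> 1/\<delta>" "1/\<delta> < real_of_int \<lfloor>1/\<delta>\<rfloor> + 1" by linarith+
  have g: "1/\<delta> > 2" using assms by (simp add: field_simps)
  have fl0: "0 \<le> \<lfloor>1/\<delta>\<rfloor>" using g by linarith
  have N: "real N = real_of_int \<lfloor>1/\<delta>\<rfloor>" unfolding N_def using fl0 by (simp add: of_nat_nat)
  have N1: "real N \<ge> 1/\<delta> - 1" using N f1 by simp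
  have N1': "real N \<ge> 1/(2*\<delta>)"
  proof -
    have "1/(2*\<delta>) = 1/\<delta> - 1/(2*\<delta>)" by (simp add: field_simps)
    also have "1/(2*\<delta>) \<ge> 1" using assms by (simp add: field_simps)
    then have "1/\<delta> - 1/(2*\<delta>) \<le> 1/\<delta> - 1" by simp
    finally show ?thesis using N1 by simp
  qed
  show ?thesis
  proof (rule that)
    show "N \<ge> 1" using N g f1 by linarith
    have "real N * \<delta> \<le> (1/\<delta>) * \<delta>" using N f1 assms by (intro mult_right_mono) auto
    then show "real N * \<delta> \<le> 1" using assms by simp
    have "real N > 0" using N g f1 by linarith
    then show "1 / real N \<le> 2 * \<delta>" using N1' assms by (simp add: field_simps)
  qed
qed

lemma slab1:
  fixes u :: "'a::euclidean_space"
  assumes u: "u \<noteq> 0"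
  shows "\<exists>K. \<forall>\<delta>>0. \<forall>\<alpha>. measure lebesgue {y \<in> cball 0 R. \<alpha> < u \<bullet> y \<and> u \<bullet> y \<le> \<alpha> + \<delta>} \<le> K * \<delta>"
proof -
  define e where "e = u /\<^sub>R (u \<bullet> u)"
  have ue: "u \<bullet> e = 1" unfolding e_def using u by simp
  define Kc where "Kc = measure lebesgue (cball (0::'a) (R + norm e))"
  have Kc0: "Kc \<ge> 0" unfolding Kc_def by simp
  show ?thesis
  proof (intro exI[of _ "2 * Kc"] allI impI)
    fix \<delta> \<alpha> :: real assume d: "\<delta> > 0"
    define S where "S = {y \<in> cball 0 R. \<alpha> < u \<bullet> y \<and> u \<bullet> y \<le> \<alpha> + \<delta>}"
    have Seq: "S = cball 0 R \<inter> {y. \<alpha> < u \<bullet> y} \<inter> {y. u \<bullet> y \<le> \<alpha> + \<delta>}" unfolding S_def by auto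
    have Sm: "S \<in> lmeasurable" unfolding Seq
      by (intro bounded_set_imp_lmeasurable sets.Int closed_leb open_leb bounded_Int)
         (auto intro: open_halfspace_gt closed_halfspace_le closed_cball)
    have Ssub: "S \<subseteq> cball 0 R" unfolding S_def by auto
    have Ssub2: "S \<subseteq> cball 0 (R + norm e)" 
      using Ssub norm_ge_zero[of e] cball_subset_cball_iff[of 0 R 0 "R + norm e"] by auto
    have Kcb: "measure lebesgue S \<le> Kc" unfolding Kc_def
      by (rule measure_mono_fmeasurable[OF Ssub2 _ lmeasurable_cball]) (use Sm in \<open>auto simp: fmeasurable_def\<close>)
    show "measure lebesgue S \<le> 2 * Kc * \<delta>"
    proof (cases "\<delta> < 1/2")
      case False
      then have "Kc * 1 \<le> Kc * (2 * \<delta>)" using Kc0 by (intro mult_left_mono) auto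
      then show ?thesis using Kcb by simp
    next
      case True
      obtain N :: nat where N: "N \<ge> 1" "real N * \<delta> \<le> 1" "1 / real N \<le> 2 * \<delta>"
        using count_bound[OF d True] by blast
      have "real (card {..<N}) * measure lebesgue S \<le> Kc" unfolding Kc_def
      proof (rule tile[OF Sm Ssub, of "{..<N}" "\<lambda>k. (real k * \<delta>) *\<^sub>R e"])
        show "norm ((real k * \<delta>) *\<^sub>R e) \<le> norm e" if "k \<in> {..<N}" for k
        proof -
          have a: "real k * \<delta> \<le> real N * \<delta>" using that d by (intro mult_right_mono) auto
          have b: "\<bar>real k * \<delta>\<bar> = real k * \<delta>" using d by simp
          have "\<bar>real k * \<delta>\<bar> \<le> 1" using a b N(2) by linarith
          then show ?thesis by (simp add: mult_left_le_one_le)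
        qed
        show "(+) ((real k * \<delta>) *\<^sub>R e) ` S \<inter> (+) ((real k' * \<delta>) *\<^sub>R e) ` S = {}"
          if "k \<in> {..<N}" "k' \<in> {..<N}" "k \<noteq> k'" for k k'
        proof (rule ccontr)
          assume "\<not> ?thesis"
          then obtain y y' where y: "y \<in> S" "y' \<in> S" "(real k * \<delta>) *\<^sub>R e + y = (real k' * \<delta>) *\<^sub>R e + y'" by auto
          define z where "z = u \<bullet> ((real k * \<delta>) *\<^sub>R e + y)"
          have z1: "z = real k * \<delta> + u \<bullet> y" unfolding z_def by (simp add: inner_add_right ue)
          have z2: "z = real k' * \<delta> + u \<bullet> y'" unfolding z_def y(3) by (simp add: inner_add_right ue)
          have "k = k'"
            by (rule int_interval_eq[OF d, of "\<alpha>" k z k'])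
               (use y(1,2) z1 z2 in \<open>auto simp: S_def algebra_simps\<close>)
          then show False using that by simp
        qed
      qed simp
      then have "real N * measure lebesgue S \<le> Kc" by simp
      then have "measure lebesgue S \<le> Kc / real N" using N by (simp add: field_simps)
      also have "\<dots> = Kc * (1 / real N)" by simp
      also have "\<dots> \<le> Kc * (2 * \<delta>)" using N Kc0 by (intro mult_left_mono) auto
      finally show ?thesis by simp
    qed
  qed
qed


lemma slab2:
  fixes u v :: "'a::euclidean_space"
  assumes cs: "(u \<bullet> v)^2 < (u \<bullet> u) * (v \<bullet> v)"
  shows "\<exists>K. \<forall>\<delta>>0. \<forall>\<alpha> \<beta>. measure lebesgue {y \<in> cball 0 R. \<alpha> < u \<bullet> y \<and> u \<bullet> y \<le> \<alpha> + \<delta> \<and> \<beta> < v \<bullet> y \<and> v \<bullet> y \<le> \<beta> + \<delta>} \<le> K * \<delta>^2"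
proof -
  define D where "D = (u \<bullet> u) * (v \<bullet> v) - (u \<bullet> v)^2"
  have D: "D > 0" unfolding D_def using cs by simp
  define e1 where "e1 = ((v \<bullet> v) / D) *\<^sub>R u - ((u \<bullet> v) / D) *\<^sub>R v"
  define e2 where "e2 = ((u \<bullet> u) / D) *\<^sub>R v - ((u \<bullet> v) / D) *\<^sub>R u"
  have ue1: "u \<bullet> e1 = 1"
  proof -
    have "u \<bullet> e1 = ((u \<bullet> u) * (v \<bullet> v) - (u \<bullet> v)^2) / D" unfolding e1_def
      by (simp add: inner_diff_right diff_divide_distrib power2_eq_square mult.commute)
    then show ?thesis unfolding D_def[symmetric] using D by simp
  qed
  have ve1: "v \<bullet> e1 = 0" unfolding e1_def using D
    by (simp add: inner_diff_right field_simps inner_commute)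
  have ue2: "u \<bullet> e2 = 0" unfolding e2_def using D
    by (simp add: inner_diff_right field_simps inner_commute)
  have ve2: "v \<bullet> e2 = 1"
  proof -
    have "v \<bullet> e2 = ((u \<bullet> u) * (v \<bullet> v) - (u \<bullet> v)^2) / D" unfolding e2_def
      by (simp add: inner_diff_right diff_divide_distrib power2_eq_square mult.commute inner_commute)
    then show ?thesis unfolding D_def[symmetric] using D by simp
  qed
  define Kc where "Kc = measure lebesgue (cball (0::'a) (R + (norm e1 + norm e2)))"
  have Kc0: "Kc \<ge> 0" unfolding Kc_def by simp
  show ?thesis
  proof (intro exI[of _ "4 * Kc"] allI impI)
    fix \<delta> \<alpha> \<beta> :: real assume d: "\<delta> > 0"
    define S where "S = {y \<in> cball 0 R. \<alpha> < u \<bullet> y \<and> u \<bullet> y \<le> \<alpha> + \<delta> \<and> \<beta> < v \<bullet> y \<and> v \<bullet> y \<le> \<beta> + \<delta>}"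
    have Seq: "S = cball 0 R \<inter> {y. \<alpha> < u \<bullet> y} \<inter> {y. u \<bullet> y \<le> \<alpha> + \<delta>} \<inter> {y. \<beta> < v \<bullet> y} \<inter> {y. v \<bullet> y \<le> \<beta> + \<delta>}"
      unfolding S_def by auto
    have Sm: "S \<in> lmeasurable" unfolding Seq
      by (intro bounded_set_imp_lmeasurable sets.Int closed_leb open_leb bounded_Int)
         (auto intro: open_halfspace_gt closed_halfspace_le closed_cball)
    have Ssub: "S \<subseteq> cball 0 R" unfolding S_def by auto
    have Ssub2: "S \<subseteq> cball 0 (R + (norm e1 + norm e2))"
      using Ssub norm_ge_zero[of e1] norm_ge_zero[of e2] cball_subset_cball_iff[of 0 R 0 "R + (norm e1 + norm e2)"] by auto
    have Kcb: "measure lebesgue S \<le> Kc" unfolding Kc_def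
      by (rule measure_mono_fmeasurable[OF Ssub2 _ lmeasurable_cball]) (use Sm in \<open>auto simp: fmeasurable_def\<close>)
    show "measure lebesgue S \<le> 4 * Kc * \<delta>^2"
    proof (cases "\<delta> < 1/2")
      case False
      then have "1/2 * (1/2) \<le> \<delta> * \<delta>" by (intro mult_mono) auto
      then have "Kc * 1 \<le> Kc * (4 * \<delta>^2)" using Kc0 by (intro mult_left_mono) (auto simp: power2_eq_square)
      then show ?thesis using Kcb by simp
    next
      case True
      obtain N :: nat where N: "N \<ge> 1" "real N * \<delta> \<le> 1" "1 / real N \<le> 2 * \<delta>"
        using count_bound[OF d True] by blast
      have nb: "\<bar>real k * \<delta>\<bar> \<le> 1" if "k < N" for k
      proof -
        have a: "real k * \<delta> \<le> real N * \<delta>" using that d by (intro mult_right_mono) auto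
        have b: "\<bar>real k * \<delta>\<bar> = real k * \<delta>" using d by simp
        show ?thesis using a b N(2) by linarith
      qed
      have "real (card ({..<N} \<times> {..<N})) * measure lebesgue S \<le> Kc" unfolding Kc_def
      proof (rule tile[OF Sm Ssub, of "{..<N} \<times> {..<N}" "\<lambda>(k,l). (real k * \<delta>) *\<^sub>R e1 + (real l * \<delta>) *\<^sub>R e2"])
        show "norm ((\<lambda>(k,l). (real k * \<delta>) *\<^sub>R e1 + (real l * \<delta>) *\<^sub>R e2) i) \<le> norm e1 + norm e2"
          if iI: "i \<in> {..<N} \<times> {..<N}" for i
        proof -
          obtain k l where i: "i = (k, l)" "k < N" "l < N" using iI by auto
          have "norm ((real k * \<delta>) *\<^sub>R e1 + (real l * \<delta>) *\<^sub>R e2) \<le> norm ((real k * \<delta>) *\<^sub>R e1) + norm ((real l * \<delta>) *\<^sub>R e2)"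
            by (rule norm_triangle_ineq)
          also have "\<dots> \<le> norm e1 + norm e2"
            using nb[OF i(2)] nb[OF i(3)] by (intro add_mono) (simp_all add: mult_left_le_one_le)
          finally show ?thesis using i by simp
        qed
        show "(+) ((\<lambda>(k,l). (real k * \<delta>) *\<^sub>R e1 + (real l * \<delta>) *\<^sub>R e2) i) ` S \<inter> (+) ((\<lambda>(k,l). (real k * \<delta>) *\<^sub>R e1 + (real l * \<delta>) *\<^sub>R e2) j) ` S = {}"
          if ijI: "i \<in> {..<N} \<times> {..<N}" "j \<in> {..<N} \<times> {..<N}" "i \<noteq> j" for i j
        proof (rule ccontr)
          obtain k l where i: "i = (k, l)" using prod.exhaust by blast
          obtain k' l' where j: "j = (k', l')" using prod.exhaust by blast
          assume "\<not> ?thesis"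
          then obtain y y' where y: "y \<in> S" "y' \<in> S"
            "(real k * \<delta>) *\<^sub>R e1 + (real l * \<delta>) *\<^sub>R e2 + y = (real k' * \<delta>) *\<^sub>R e1 + (real l' * \<delta>) *\<^sub>R e2 + y'"
            unfolding i j by auto
          define z where "z = (real k * \<delta>) *\<^sub>R e1 + (real l * \<delta>) *\<^sub>R e2 + y"
          have z1: "u \<bullet> z = real k * \<delta> + u \<bullet> y" "v \<bullet> z = real l * \<delta> + v \<bullet> y"
            unfolding z_def by (simp_all add: inner_add_right ue1 ue2 ve1 ve2)
          have z2: "u \<bullet> z = real k' * \<delta> + u \<bullet> y'" "v \<bullet> z = real l' * \<delta> + v \<bullet> y'"
            unfolding z_def y(3) by (simp_all add: inner_add_right ue1 ue2 ve1 ve2)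
          have "k = k'"
            by (rule int_interval_eq[OF d, of "\<alpha>" k "u \<bullet> z" k'])
               (use y(1,2) z1 z2 in \<open>auto simp: S_def algebra_simps\<close>)
          moreover have "l = l'"
            by (rule int_interval_eq[OF d, of "\<beta>" l "v \<bullet> z" l'])
               (use y(1,2) z1 z2 in \<open>auto simp: S_def algebra_simps\<close>)
          ultimately show False using ijI i j by simp
        qed
      qed simp
      then have "(real N * real N) * measure lebesgue S \<le> Kc" by simp
      then have "measure lebesgue S \<le> Kc / (real N * real N)" using N by (simp add: field_simps)
      also have "\<dots> = Kc * ((1 / real N) * (1 / real N))" by simp
      also have "\<dots> \<le> Kc * ((2 * \<delta>) * (2 * \<delta>))" using N Kc0 d by (intro mult_left_mono mult_mono) auto
      finally show ?thesis by (simp add: power2_eq_square)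
    qed
  qed
qed


locale prep =
  fixes P :: "('a::euclidean_space \<times> real) set" and Om :: "'a set"
  assumes finP: "finite P" and neP: "P \<noteq> {}" and unit: "\<And>p. p \<in> P \<Longrightarrow> norm (fst p) = 1"
    and Om_eq: "Om = {x. \<forall>p\<in>P. fst p \<bullet> x \<le> snd p}"
    and bnd: "bounded Om" and intne: "interior Om \<noteq> {}"
begin

definition ht where "ht p x = snd p - fst p \<bullet> x"
definition hh where "hh x = Min ((\<lambda>p. ht p x) ` P)"

lemma hh_le: "p \<in> P \<Longrightarrow> hh x \<le> ht p x"
  unfolding hh_def using finP by simp

lemma hh_att: "\<exists>p\<in>P. hh x = ht p x"
proof -
  have "hh x \<in> (\<lambda>p. ht p x) ` P" unfolding hh_def using finP neP by (intro Min_in) auto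
  then show ?thesis by auto
qed

lemma hh_ge_iff: "c \<le> hh x \<longleftrightarrow> (\<forall>p\<in>P. c \<le> ht p x)"
  unfolding hh_def using finP neP by simp

lemma Om_iff: "x \<in> Om \<longleftrightarrow> 0 \<le> hh x"
  unfolding hh_ge_iff Om_eq ht_def by auto

lemma ht_add: "ht p (x + y) = ht p x - fst p \<bullet> y"
  unfolding ht_def by (simp add: inner_add_right)

lemma ht_diff: "ht p (x - y) = ht p x + fst p \<bullet> y"
  unfolding ht_def by (simp add: inner_diff_right)

lemma dot_bounds: "p \<in> P \<Longrightarrow> q \<in> P \<Longrightarrow> fst q \<bullet> fst p \<le> 1 \<and> -1 \<le> fst q \<bullet> fst p"
  using Cauchy_Schwarz_ineq2[of "fst q" "fst p"] unit[of p] unit[of q] by auto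

lemma dot_self: "p \<in> P \<Longrightarrow> fst p \<bullet> fst p = 1"
  using unit[of p] by (simp add: power2_norm_eq_inner[symmetric])

lemma dot_norm: "p \<in> P \<Longrightarrow> fst p \<bullet> z \<le> norm z"
  using norm_cauchy_schwarz[of "fst p" z] unit[of p] by simp

lemma hh_lip: "hh x \<le> hh y + norm (x - y)"
proof -
  obtain p where p: "p \<in> P" "hh y = ht p y" using hh_att by blast
  have "hh x \<le> ht p x" by (rule hh_le[OF p(1)])
  also have "ht p x = ht p y + fst p \<bullet> (y - x)" unfolding ht_def by (simp add: inner_diff_right)
  also have "fst p \<bullet> (y - x) \<le> norm (x - y)" using dot_norm[OF p(1), of "y - x"] by (simp add: norm_minus_commute)
  finally show ?thesis using p by simp
qed

lemma hh_cont: "continuous_on UNIV hh"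
  unfolding continuous_on_iff
proof (intro ballI allI impI)
  fix x :: 'a and e :: real assume e: "0 < e"
  show "\<exists>d>0. \<forall>x'\<in>UNIV. dist x' x < d \<longrightarrow> dist (hh x') (hh x) < e"
  proof (intro exI[of _ e] conjI ballI impI)
    fix x' assume d: "dist x' x < e"
    have "hh x' \<le> hh x + norm (x' - x)" "hh x \<le> hh x' + norm (x - x')" using hh_lip by auto
    then have "\<bar>hh x' - hh x\<bar> \<le> norm (x' - x)" by (auto simp: norm_minus_commute)
    then show "dist (hh x') (hh x) < e" using d by (simp add: dist_real_def dist_norm)
  qed (use e in auto)
qed

lemma ht_cont: "continuous_on UNIV (ht p)"
  unfolding ht_def by (intro continuous_intros)

lemma cball_sub: "0 \<le> r \<Longrightarrow> cball x r \<subseteq> Om \<longleftrightarrow> r \<le> hh x"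
proof
  assume r: "0 \<le> r" and sub: "cball x r \<subseteq> Om"
  show "r \<le> hh x" unfolding hh_ge_iff
  proof
    fix p assume p: "p \<in> P"
    have "x + r *\<^sub>R fst p \<in> cball x r" using unit[OF p] r by (simp add: dist_norm)
    then have "0 \<le> hh (x + r *\<^sub>R fst p)" using sub Om_iff by auto
    also have "\<dots> \<le> ht p (x + r *\<^sub>R fst p)" by (rule hh_le[OF p])
    also have "\<dots> = ht p x - r" using dot_self[OF p] by (simp add: ht_add)
    finally show "r \<le> ht p x" by simp
  qed
next
  assume r: "0 \<le> r" and h: "r \<le> hh x"
  show "cball x r \<subseteq> Om"
  proof
    fix z assume z: "z \<in> cball x r"
    have "0 \<le> hh z" unfolding hh_ge_iff
    proof
      fix p assume p: "p \<in> P"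
      have "ht p z = ht p x - fst p \<bullet> (z - x)" unfolding ht_def by (simp add: inner_diff_right)
      moreover have "fst p \<bullet> (z - x) \<le> r" using dot_norm[OF p, of "z - x"] z by (simp add: dist_norm norm_minus_commute)
      moreover have "r \<le> ht p x" using h hh_le[OF p, of x] by simp
      ultimately show "0 \<le> ht p z" by simp
    qed
    then show "z \<in> Om" using Om_iff by simp
  qed
qed

lemma closedOm: "closed Om"
proof -
  have "Om = {x. (\<lambda>_. 0) x \<le> hh x}" using Om_iff by auto
  then show ?thesis using closed_Collect_le[OF continuous_on_const hh_cont] by simp
qed

lemma interior_iff: "x \<in> interior Om \<longleftrightarrow> 0 < hh x"
proof
  assume "x \<in> interior Om"
  then obtain e where e: "e > 0" "ball x e \<subseteq> Om" by (auto simp: mem_interior)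
  then have "cball x (e/2) \<subseteq> Om" by (intro subset_trans[OF _ e(2)]) (simp add: cball_subset_ball_iff)
  then have "e/2 \<le> hh x" using cball_sub[of "e/2" x] e by simp
  then show "0 < hh x" using e by simp
next
  assume h: "0 < hh x"
  then have "cball x (hh x) \<subseteq> Om" using cball_sub by simp
  then have "ball x (hh x) \<subseteq> Om" using ball_subset_cball by blast
  then show "x \<in> interior Om" using h by (auto simp: mem_interior)
qed

lemma frontier_iff: "x \<in> frontier Om \<longleftrightarrow> x \<in> Om \<and> hh x = 0"
  unfolding frontier_def closure_closed[OF closedOm] using interior_iff Om_iff by auto

lemma nbhd_iff:
  assumes x: "x \<in> Om"
  shows "(\<exists>y\<in>frontier Om. dist x y \<le> \<epsilon>) \<longleftrightarrow> hh x \<le> \<epsilon>"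
proof
  assume "\<exists>y\<in>frontier Om. dist x y \<le> \<epsilon>"
  then obtain y where y: "y \<in> Om" "hh y = 0" "dist x y \<le> \<epsilon>" using frontier_iff by auto
  obtain p where p: "p \<in> P" "hh y = ht p y" using hh_att by blast
  have "hh x \<le> ht p x" by (rule hh_le[OF p(1)])
  also have "ht p x = ht p y + fst p \<bullet> (y - x)" unfolding ht_def by (simp add: inner_diff_right)
  also have "fst p \<bullet> (y - x) \<le> dist x y" using dot_norm[OF p(1), of "y - x"] by (simp add: dist_norm norm_minus_commute)
  finally show "hh x \<le> \<epsilon>" using y p by simp
next
  assume h: "hh x \<le> \<epsilon>"
  have h0: "0 \<le> hh x" using x Om_iff by simp
  obtain p where p: "p \<in> P" "hh x = ht p x" using hh_att by blast
  define y where "y = x + hh x *\<^sub>R fst p"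
  have "0 \<le> hh y" unfolding hh_ge_iff
  proof
    fix q assume q: "q \<in> P"
    have "ht q y = ht q x - hh x * (fst q \<bullet> fst p)" unfolding y_def by (simp add: ht_add)
    moreover have "hh x * (fst q \<bullet> fst p) \<le> hh x * 1" using dot_bounds[OF p(1) q] h0 by (intro mult_left_mono) auto
    moreover have "hh x \<le> ht q x" by (rule hh_le[OF q])
    ultimately show "0 \<le> ht q y" by simp
  qed
  moreover have "hh y \<le> 0"
  proof -
    have "hh y \<le> ht p y" by (rule hh_le[OF p(1)])
    also have "ht p y = 0" unfolding y_def using p dot_self[OF p(1)] by (simp add: ht_add)
    finally show ?thesis .
  qed
  ultimately have "y \<in> frontier Om" using frontier_iff Om_iff by auto
  moreover have "dist x y = hh x" unfolding y_def using unit[OF p(1)] h0 by (simp add: dist_norm)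
  ultimately show "\<exists>y\<in>frontier Om. dist x y \<le> \<epsilon>" using h by (intro bexI[of _ y]) auto
qed

lemma inner_eq: "inner_nbhd \<epsilon> Om = {x \<in> Om. hh x \<le> \<epsilon>}"
  unfolding inner_nbhd_def using nbhd_iff by auto

end


context prep begin

definition "RS = {r. r \<ge> 0 \<and> (\<exists>x. cball x r \<subseteq> Om)}"

lemma RS_eq: "RS = {r. 0 \<le> r \<and> (\<exists>x. r \<le> hh x)}"
  unfolding RS_def using cball_sub by auto

lemma Om_R: "\<exists>R. Om \<subseteq> cball 0 R"
  using bnd unfolding bounded_iff by (auto simp: subset_iff)

lemma RS_bdd: "bdd_above RS"
proof -
  obtain R where R: "Om \<subseteq> cball 0 R" using Om_R by blast
  obtain p where p: "p \<in> P" using neP by blast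
  show ?thesis
  proof (rule bdd_aboveI[of _ "\<bar>snd p\<bar> + R"])
    fix r assume "r \<in> RS"
    then obtain x where x: "0 \<le> r" "r \<le> hh x" unfolding RS_eq by auto
    then have "x \<in> Om" using Om_iff by simp
    then have nx: "norm x \<le> R" using R by auto
    have "hh x \<le> ht p x" by (rule hh_le[OF p])
    also have "ht p x = snd p + fst p \<bullet> (- x)" unfolding ht_def by simp
    also have "fst p \<bullet> (- x) \<le> norm x" using dot_norm[OF p, of "- x"] by simp
    finally show "r \<le> \<bar>snd p\<bar> + R" using x nx by linarith
  qed
qed

lemma In_upper: "x \<in> Om \<Longrightarrow> hh x \<le> inradius Om"
  unfolding inradius_def RS_def[symmetric]
  by (rule cSup_upper[OF _ RS_bdd]) (auto simp: RS_eq Om_iff)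

lemma In_pos: "0 < inradius Om"
proof -
  obtain x where "x \<in> interior Om" using intne by blast
  then have h: "0 < hh x" "x \<in> Om" using interior_iff interior_subset by auto
  then show ?thesis using In_upper[of x] by simp
qed

lemma In_approx: "t < inradius Om \<Longrightarrow> \<exists>x\<in>Om. t < hh x"
proof -
  assume t: "t < inradius Om"
  obtain x0 where "x0 \<in> interior Om" using intne by blast
  then have "0 < hh x0" using interior_iff by blast
  then have "0 \<in> RS" unfolding RS_eq by (auto intro!: exI[of _ x0])
  then have ne: "RS \<noteq> {}" by auto
  obtain r where "r \<in> RS" "t < r" using t less_cSup_iff[OF ne RS_bdd, of t]
    unfolding inradius_def RS_def[symmetric] by auto
  then obtain x where "0 \<le> r" "r \<le> hh x" "t < r" unfolding RS_eq by auto
  then show ?thesis using Om_iff by (intro bexI[of _ x]) auto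
qed

lemma opp: assumes p: "p \<in> P" and q: "q \<in> P" and pq: "fst q = - fst p"
  shows "2 * inradius Om \<le> snd p + snd q"
proof (rule ccontr)
  assume "\<not> ?thesis"
  then have "(snd p + snd q) / 2 < inradius Om" by simp
  then obtain x where x: "x \<in> Om" "(snd p + snd q) / 2 < hh x" using In_approx by blast
  have "ht p x + ht q x = snd p + snd q" unfolding ht_def pq by simp
  moreover have "hh x \<le> ht p x" "hh x \<le> ht q x" using hh_le p q by auto
  ultimately show False using x by simp
qed

end


lemma slab_lm: "{y \<in> cball (0::'a::euclidean_space) R. \<alpha> < u \<bullet> y \<and> u \<bullet> y \<le> \<alpha>'} \<in> lmeasurable"
proof -
  have "{y \<in> cball (0::'a) R. \<alpha> < u \<bullet> y \<and> u \<bullet> y \<le> \<alpha>'} = cball 0 R \<inter> {y. \<alpha> < u \<bullet> y} \<inter> {y. u \<bullet> y \<le> \<alpha>'}" by auto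
  then show ?thesis
    by (simp only:) (intro bounded_set_imp_lmeasurable sets.Int closed_leb open_leb bounded_Int;
        auto intro: open_halfspace_gt closed_halfspace_le closed_cball)
qed

lemma slab2_lm: "{y \<in> cball (0::'a::euclidean_space) R. \<alpha> < u \<bullet> y \<and> u \<bullet> y \<le> \<alpha>' \<and> \<beta> < v \<bullet> y \<and> v \<bullet> y \<le> \<beta>'} \<in> lmeasurable"
proof -
  have "{y \<in> cball (0::'a) R. \<alpha> < u \<bullet> y \<and> u \<bullet> y \<le> \<alpha>' \<and> \<beta> < v \<bullet> y \<and> v \<bullet> y \<le> \<beta>'}
     = cball 0 R \<inter> {y. \<alpha> < u \<bullet> y} \<inter> {y. u \<bullet> y \<le> \<alpha>'} \<inter> {y. \<beta> < v \<bullet> y} \<inter> {y. v \<bullet> y \<le> \<beta>'}" by auto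
  then show ?thesis
    by (simp only:) (intro bounded_set_imp_lmeasurable sets.Int closed_leb open_leb bounded_Int;
        auto intro: open_halfspace_gt closed_halfspace_le closed_cball)
qed

context prep begin

definition Lev where "Lev t = {x \<in> Om. hh x \<le> t}"
definition C where "C p = {x. hh x = ht p x}"
definition NN where "NN = {x. \<exists>q\<in>P. \<exists>r\<in>P. q \<noteq> r \<and> ht q x = hh x \<and> ht r x = hh x}"

lemma Lev_compact: "compact (Lev t)"
proof -
  have "Lev t = Om \<inter> {x. hh x \<le> (\<lambda>_. t) x}" unfolding Lev_def by auto
  moreover have "closed (Om \<inter> {x. hh x \<le> (\<lambda>_. t) x})"
    by (intro closed_Int closedOm closed_Collect_le hh_cont continuous_on_const)
  ultimately show ?thesis using bnd by (metis compact_eq_bounded_closed bounded_Int)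
qed

lemma Lev_lm: "Lev t \<in> lmeasurable" using Lev_compact lmeasurable_compact by blast

lemma Lev_sub: "Lev t \<subseteq> Om" unfolding Lev_def by auto

lemma C_closed: "closed (C p)" unfolding C_def by (intro closed_Collect_eq hh_cont ht_cont)

lemma NN_negl: "negligible NN"
proof -
  let ?H = "(\<lambda>(q,r). {x. (fst r - fst q) \<bullet> x = snd r - snd q}) ` {z \<in> P \<times> P. fst z \<noteq> snd z}"
  have "NN \<subseteq> \<Union> ?H"
  proof
    fix x assume "x \<in> NN"
    then obtain q r where qr0: "q \<in> P" "r \<in> P" "q \<noteq> r" "ht q x = hh x" "ht r x = hh x" unfolding NN_def by blast
    then have qr: "q \<in> P" "r \<in> P" "q \<noteq> r" "ht q x = ht r x" by auto
    then have "(fst r - fst q) \<bullet> x = snd r - snd q" unfolding ht_def by (simp add: inner_diff_left)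
    then have c1: "x \<in> {x. (fst r - fst q) \<bullet> x = snd r - snd q}" by simp
    have c2: "{x. (fst r - fst q) \<bullet> x = snd r - snd q} \<in> ?H"
      using qr by (intro image_eqI[where x="(q,r)"]) auto
    show "x \<in> \<Union> ?H" by (rule UnionI[OF c2 c1])
  qed
  moreover have "negligible (\<Union> ?H)"
  proof (rule negligible_Union)
    show "finite ?H" using finP by auto
    fix T assume "T \<in> ?H"
    then obtain q r where qr: "q \<in> P" "r \<in> P" "q \<noteq> r" "T = {x. (fst r - fst q) \<bullet> x = snd r - snd q}" by auto
    have d: "fst r - fst q \<noteq> 0 \<or> snd r - snd q \<noteq> 0" using qr(3) by (auto simp: prod_eq_iff)
    show "negligible T" unfolding qr(4) by (rule negligible_hyperplane[OF d])
  qed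
  ultimately show ?thesis using negligible_subset by blast
qed

lemma NN_null: "NN \<in> null_sets lebesgue" using NN_negl negligible_iff_null_sets by blast

lemma lm_sub: "X \<in> sets lebesgue \<Longrightarrow> X \<subseteq> Om \<Longrightarrow> X \<in> lmeasurable"
  using bnd bounded_subset bounded_set_imp_lmeasurable by blast

lemma piece_sets: "X \<in> sets lebesgue \<Longrightarrow> X \<inter> C p - NN \<in> sets lebesgue"
  using sets.Diff[OF sets.Int[OF _ closed_leb[OF C_closed]] null_setsD2[OF NN_null]] by blast

lemma piece_eq: "X \<in> sets lebesgue \<Longrightarrow> measure lebesgue (X \<inter> C p - NN) = measure lebesgue (X \<inter> C p)"
  using measure_Diff_null_set[OF sets.Int[OF _ closed_leb[OF C_closed]] NN_null] by blast

lemma decomp: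
  assumes X: "X \<in> sets lebesgue" "X \<subseteq> Om"
  shows "measure lebesgue X = (\<Sum>p\<in>P. measure lebesgue (X \<inter> C p - NN))"
proof -
  have "measure lebesgue X = measure lebesgue (X - NN)" using X NN_null by (simp add: measure_Diff_null_set)
  also have "X - NN = (\<Union>p\<in>P. X \<inter> C p - NN)"
  proof
    show "X - NN \<subseteq> (\<Union>p\<in>P. X \<inter> C p - NN)"
    proof
      fix x assume "x \<in> X - NN"
      moreover obtain p where "p \<in> P" "hh x = ht p x" using hh_att by blast
      ultimately show "x \<in> (\<Union>p\<in>P. X \<inter> C p - NN)" unfolding C_def by auto
    qed
  qed auto
  also have "measure lebesgue (\<Union>p\<in>P. X \<inter> C p - NN) = (\<Sum>p\<in>P. measure lebesgue (X \<inter> C p - NN))"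
  proof (rule measure_finite_Union[OF finP])
    show "(\<lambda>p. X \<inter> C p - NN) ` P \<subseteq> sets lebesgue" using piece_sets[OF X(1)] by auto
    show "disjoint_family_on (\<lambda>p. X \<inter> C p - NN) P"
      unfolding disjoint_family_on_def
    proof (intro ballI impI)
      fix p q assume pq: "p \<in> P" "q \<in> P" "p \<noteq> q"
      show "(X \<inter> C p - NN) \<inter> (X \<inter> C q - NN) = {}"
      proof (rule ccontr)
        assume "\<not> ?thesis"
        then obtain x where x: "x \<in> C p" "x \<in> C q" "x \<notin> NN" by blast
        then have "ht p x = hh x" "ht q x = hh x" unfolding C_def by auto
        then have "x \<in> NN" unfolding NN_def using pq by blast
        then show False using x by simp
      qed
    qed
    show "emeasure lebesgue (X \<inter> C p - NN) \<noteq> \<infinity>" for p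
    proof -
      have "X \<inter> C p - NN \<subseteq> Om" using X(2) by blast
      then have "X \<inter> C p - NN \<in> lmeasurable" using lm_sub[OF piece_sets[OF X(1), of p]] by blast
      then show ?thesis by (auto simp: fmeasurable_def)
    qed
  qed
  finally show ?thesis .
qed

lemma trans_pt:
  assumes p: "p \<in> P" and x: "x \<in> C p" and s: "0 \<le> s" "s \<le> hh x"
  shows "hh (x + s *\<^sub>R fst p) = hh x - s \<and> x + s *\<^sub>R fst p \<in> C p \<and> x + s *\<^sub>R fst p \<in> Om"
proof -
  let ?y = "x + s *\<^sub>R fst p"
  have hp: "ht p ?y = hh x - s" using x dot_self[OF p] unfolding C_def by (simp add: ht_add)
  have "hh x - s \<le> hh ?y" unfolding hh_ge_iff
  proof
    fix q assume q: "q \<in> P"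
    have "ht q ?y = ht q x - s * (fst q \<bullet> fst p)" by (simp add: ht_add)
    moreover have "s * (fst q \<bullet> fst p) \<le> s * 1" using dot_bounds[OF p q] s by (intro mult_left_mono) auto
    moreover have "hh x \<le> ht q x" by (rule hh_le[OF q])
    ultimately show "hh x - s \<le> ht q ?y" by simp
  qed
  moreover have "hh ?y \<le> hh x - s" using hh_le[OF p, of ?y] hp by simp
  ultimately have e: "hh ?y = hh x - s" by simp
  then show ?thesis using hp s unfolding C_def by (simp add: Om_iff)
qed

definition "F t = measure lebesgue (Lev t)"

lemma Lev_mono: "a \<le> b \<Longrightarrow> Lev a \<subseteq> Lev b" unfolding Lev_def by auto

lemma F_diff: "a \<le> b \<Longrightarrow> F b - F a = measure lebesgue (Lev b - Lev a)"
  unfolding F_def using measurable_measure_Diff[OF Lev_lm[of b], of "Lev a"] Lev_lm[of a] Lev_mono[of a b]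
  by (auto simp: fmeasurable_def)

lemma F_mono: "a \<le> b \<Longrightarrow> F a \<le> F b"
  unfolding F_def using measure_mono_fmeasurable[OF Lev_mono[of a b] _ Lev_lm[of b]] Lev_lm[of a]
  by (auto simp: fmeasurable_def)

lemma Sh_sets: "Lev b - Lev a \<in> sets lebesgue" using Lev_lm by (auto simp: fmeasurable_def)

lemma F_P1:
  assumes t: "0 \<le> t" "t \<le> t'" "0 \<le> \<delta>"
  shows "F (t'+\<delta>) - F t' \<le> F (t+\<delta>) - F t"
proof -
  define Sh' where "Sh' = Lev (t'+\<delta>) - Lev t'"
  define Sh where "Sh = Lev (t+\<delta>) - Lev t"
  have S: "Sh' \<in> sets lebesgue" "Sh' \<subseteq> Om" "Sh \<in> sets lebesgue" "Sh \<subseteq> Om"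
    unfolding Sh'_def Sh_def using Sh_sets Lev_sub by auto
  have "F (t'+\<delta>) - F t' = measure lebesgue Sh'" unfolding Sh'_def using F_diff t by simp
  also have "\<dots> = (\<Sum>p\<in>P. measure lebesgue (Sh' \<inter> C p - NN))" by (rule decomp[OF S(1,2)])
  also have "\<dots> \<le> (\<Sum>p\<in>P. measure lebesgue (Sh \<inter> C p - NN))"
  proof (rule sum_mono)
    fix p assume p: "p \<in> P"
    define s where "s = t' - t"
    have pm: "Sh' \<inter> C p - NN \<in> lmeasurable" using lm_sub[OF piece_sets[OF S(1), of p]] S(2) by blast
    have "measure lebesgue (Sh' \<inter> C p - NN) = measure lebesgue ((+) (s *\<^sub>R fst p) ` (Sh' \<inter> C p - NN))"
      by (rule measure_translation[symmetric])
    also have "\<dots> \<le> measure lebesgue (Sh \<inter> C p)"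
    proof (rule measure_mono_fmeasurable)
      show "(+) (s *\<^sub>R fst p) ` (Sh' \<inter> C p - NN) \<subseteq> Sh \<inter> C p"
      proof
        fix z assume "z \<in> (+) (s *\<^sub>R fst p) ` (Sh' \<inter> C p - NN)"
        then obtain x where x: "x \<in> Sh'" "x \<in> C p" "z = s *\<^sub>R fst p + x" by auto
        have hx: "t' < hh x" "hh x \<le> t' + \<delta>" "x \<in> Om" using x(1) unfolding Sh'_def Lev_def by auto
        have "hh (x + s *\<^sub>R fst p) = hh x - s \<and> x + s *\<^sub>R fst p \<in> C p \<and> x + s *\<^sub>R fst p \<in> Om"
          by (rule trans_pt[OF p x(2)]) (use hx t s_def in auto)
        then have "hh z = hh x - s" "z \<in> C p" "z \<in> Om" using x(3) by (simp_all add: add.commute)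
        then show "z \<in> Sh \<inter> C p" using hx unfolding Sh_def Lev_def s_def by auto
      qed
      show "(+) (s *\<^sub>R fst p) ` (Sh' \<inter> C p - NN) \<in> sets lebesgue"
        using measurable_translation[OF pm] by (auto simp: fmeasurable_def)
      have "Sh \<inter> C p \<in> sets lebesgue" by (rule sets.Int[OF S(3) closed_leb[OF C_closed]])
      moreover have "Sh \<inter> C p \<subseteq> Om" using S(4) by blast
      ultimately show "Sh \<inter> C p \<in> fmeasurable lebesgue" by (rule lm_sub)
    qed
    also have "\<dots> = measure lebesgue (Sh \<inter> C p - NN)" using piece_eq[OF S(3)] by simp
    finally show "measure lebesgue (Sh' \<inter> C p - NN) \<le> measure lebesgue (Sh \<inter> C p - NN)" .
  qed
  also have "\<dots> = measure lebesgue Sh" by (rule decomp[OF S(3,4), symmetric])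
  also have "\<dots> = F (t+\<delta>) - F t" unfolding Sh_def using F_diff t by simp
  finally show ?thesis .
qed

end


context prep begin

lemma F0: "F 0 = 0"
proof -
  have "Lev 0 \<subseteq> \<Union> ((\<lambda>p. {x. fst p \<bullet> x = snd p}) ` P)"
  proof
    fix x assume "x \<in> Lev 0"
    then have "hh x = 0" unfolding Lev_def using Om_iff by auto
    moreover obtain p where "p \<in> P" "hh x = ht p x" using hh_att by blast
    ultimately have c1: "x \<in> {x. fst p \<bullet> x = snd p}" unfolding ht_def by auto
    have c2: "{x. fst p \<bullet> x = snd p} \<in> (\<lambda>p. {x. fst p \<bullet> x = snd p}) ` P" using \<open>p \<in> P\<close> by blast
    show "x \<in> \<Union> ((\<lambda>p. {x. fst p \<bullet> x = snd p}) ` P)" by (rule UnionI[OF c2 c1])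
  qed
  moreover have "negligible (\<Union> ((\<lambda>p. {x. fst p \<bullet> x = snd p}) ` P))"
  proof (rule negligible_Union)
    show "finite ((\<lambda>p. {x. fst p \<bullet> x = snd p}) ` P)" using finP by simp
    fix T assume "T \<in> (\<lambda>p. {x. fst p \<bullet> x = snd p}) ` P"
    then obtain p where p: "p \<in> P" "T = {x. fst p \<bullet> x = snd p}" by auto
    have "fst p \<noteq> 0" using unit[OF p(1)] by auto
    then have d: "fst p \<noteq> 0 \<or> snd p \<noteq> 0" by simp
    show "negligible T" unfolding p(2) by (rule negligible_hyperplane[OF d])
  qed
  ultimately have "negligible (Lev 0)" using negligible_subset by blast
  then show ?thesis unfolding F_def using negligible_imp_measure0 by blast
qed

lemma F_P3: "\<exists>K1. \<forall>\<delta>. 0 \<le> \<delta> \<longrightarrow> F \<delta> - F 0 \<le> K1 * \<delta>"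
proof -
  obtain R where R: "Om \<subseteq> cball 0 R" using Om_R by blast
  have "\<forall>p\<in>P. \<exists>K. \<forall>\<delta>>0. \<forall>\<alpha>. measure lebesgue {y \<in> cball 0 R. \<alpha> < fst p \<bullet> y \<and> fst p \<bullet> y \<le> \<alpha> + \<delta>} \<le> K * \<delta>"
  proof
    fix p assume p: "p \<in> P"
    have "fst p \<noteq> 0" using unit[OF p] by auto
    then show "\<exists>K. \<forall>\<delta>>0. \<forall>\<alpha>. measure lebesgue {y \<in> cball 0 R. \<alpha> < fst p \<bullet> y \<and> fst p \<bullet> y \<le> \<alpha> + \<delta>} \<le> K * \<delta>"
      by (rule slab1)
  qed
  then obtain Kf where Kf0: "\<forall>p\<in>P. \<forall>\<delta>>0. \<forall>\<alpha>. measure lebesgue {y \<in> cball 0 R. \<alpha> < fst p \<bullet> y \<and> fst p \<bullet> y \<le> \<alpha> + \<delta>} \<le> Kf p * \<delta>"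
    by (rule bchoice[THEN exE])
  note Kf = Kf0[rule_format]
  show ?thesis
  proof (intro exI[of _ "\<Sum>p\<in>P. 2 * Kf p"] allI impI)
    fix \<delta> :: real assume d: "0 \<le> \<delta>"
    show "F \<delta> - F 0 \<le> (\<Sum>p\<in>P. 2 * Kf p) * \<delta>"
    proof (cases "\<delta> = 0")
      case True then show ?thesis by simp
    next
      case False
      then have d: "\<delta> > 0" using d by simp
      have "F \<delta> - F 0 = F \<delta>" using F0 by simp
      also have "\<dots> = (\<Sum>p\<in>P. measure lebesgue (Lev \<delta> \<inter> C p - NN))"
        unfolding F_def using Lev_lm Lev_sub by (intro decomp) (auto simp: fmeasurable_def)
      also have "\<dots> \<le> (\<Sum>p\<in>P. 2 * Kf p * \<delta>)"
      proof (rule sum_mono)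
        fix p assume p: "p \<in> P"
        have "measure lebesgue (Lev \<delta> \<inter> C p - NN)
              \<le> measure lebesgue {y \<in> cball 0 R. (snd p - 2*\<delta>) < fst p \<bullet> y \<and> fst p \<bullet> y \<le> (snd p - 2*\<delta>) + 2*\<delta>}"
        proof (rule measure_mono_fmeasurable)
          show "Lev \<delta> \<inter> C p - NN \<subseteq> {y \<in> cball 0 R. (snd p - 2*\<delta>) < fst p \<bullet> y \<and> fst p \<bullet> y \<le> (snd p - 2*\<delta>) + 2*\<delta>}"
          proof
            fix y assume y: "y \<in> Lev \<delta> \<inter> C p - NN"
            then have "0 \<le> ht p y" "ht p y \<le> \<delta>" "y \<in> Om" unfolding Lev_def C_def using Om_iff by auto
            then show "y \<in> {y \<in> cball 0 R. (snd p - 2*\<delta>) < fst p \<bullet> y \<and> fst p \<bullet> y \<le> (snd p - 2*\<delta>) + 2*\<delta>}"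
              using R d unfolding ht_def by auto
          qed
          have "Lev \<delta> \<in> sets lebesgue" using Lev_lm[of \<delta>] by (simp add: fmeasurable_def)
          then show "Lev \<delta> \<inter> C p - NN \<in> sets lebesgue" by (rule piece_sets)
        qed (rule slab_lm)
        also have "\<dots> \<le> Kf p * (2 * \<delta>)" using Kf[OF p, of "2*\<delta>" "snd p - 2*\<delta>"] d by simp
        finally show "measure lebesgue (Lev \<delta> \<inter> C p - NN) \<le> 2 * Kf p * \<delta>" by simp
      qed
      also have "\<dots> = (\<Sum>p\<in>P. 2 * Kf p) * \<delta>" by (simp add: sum_distrib_right)
      finally show ?thesis .
    qed
  qed
qed

end


context prep begin

lemma cs_pair:
  assumes p: "p \<in> P" and q: "q \<in> P" and n1: "fst q \<noteq> fst p" and n2: "fst q \<noteq> - fst p"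
  shows "((- fst p) \<bullet> (fst p - fst q))^2 < ((- fst p) \<bullet> (- fst p)) * ((fst p - fst q) \<bullet> (fst p - fst q))"
proof -
  define c where "c = fst q \<bullet> fst p"
  have pp: "fst p \<bullet> fst p = 1" and qq: "fst q \<bullet> fst q = 1" using dot_self p q by auto
  have c1: "c \<le> 1" "-1 \<le> c" using dot_bounds[OF p q] c_def by auto
  have "c \<noteq> 1"
  proof
    assume "c = 1"
    then have "(fst p - fst q) \<bullet> (fst p - fst q) = 0"
      using pp qq c_def by (simp add: inner_diff_left inner_diff_right inner_commute)
    then show False using n1 by simp
  qed
  moreover have "c \<noteq> -1"
  proof
    assume "c = -1"
    then have "(fst p + fst q) \<bullet> (fst p + fst q) = 0"
      using pp qq c_def by (simp add: inner_add_left inner_add_right inner_commute)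
    then have "fst p + fst q = 0" by simp
    then have "fst q = - fst p" by (metis add_eq_0_iff)
    then show False using n2 by simp
  qed
  ultimately have c2: "-1 < c" "c < 1" using c1 by auto
  have e1: "(- fst p) \<bullet> (fst p - fst q) = c - 1" using pp c_def by (simp add: inner_diff_right inner_commute)
  have e2: "(- fst p) \<bullet> (- fst p) = 1" using pp by simp
  have e3: "(fst p - fst q) \<bullet> (fst p - fst q) = 2 - 2 * c"
    using pp qq c_def by (simp add: inner_diff_left inner_diff_right inner_commute)
  have "(c - 1)^2 < 2 - 2 * c"
  proof -
    have "(c - 1)^2 = (1 - c) * (1 - c)" by (simp add: power2_eq_square algebra_simps)
    also have "\<dots> < (1 - c) * 2" using c2 by (intro mult_strict_left_mono) auto
    finally show ?thesis by simp
  qed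
  then show ?thesis using e1 e2 e3 by simp
qed

lemma F_P2:
  assumes t: "0 < t" "t < inradius Om"
  shows "\<exists>K d. d > 0 \<and> (\<forall>\<delta>. 0 < \<delta> \<and> \<delta> < d \<longrightarrow> F t - F (t-\<delta>) \<le> F (t+\<delta>) - F t + K * \<delta>^2)"
proof -
  define In where "In = inradius Om"
  obtain R where R: "Om \<subseteq> cball 0 R" using Om_R by blast
  define Q where "Q = {z \<in> P \<times> P. fst (snd z) \<noteq> fst (fst z) \<and> fst (snd z) \<noteq> - fst (fst z)}"
  define uu where "uu z = - fst (fst z)" for z :: "('a \<times> real) \<times> ('a \<times> real)"
  define vv where "vv z = fst (fst z) - fst (snd z)" for z :: "('a \<times> real) \<times> ('a \<times> real)"
  have finQ: "finite Q" unfolding Q_def using finP by auto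
  have "\<forall>z\<in>Q. \<exists>K. \<forall>\<delta>>0. \<forall>\<alpha> \<beta>. measure lebesgue {y \<in> cball 0 R. \<alpha> < uu z \<bullet> y \<and> uu z \<bullet> y \<le> \<alpha> + \<delta> \<and> \<beta> < vv z \<bullet> y \<and> vv z \<bullet> y \<le> \<beta> + \<delta>} \<le> K * \<delta>^2"
  proof
    fix z assume z: "z \<in> Q"
    then obtain p q where pq: "z = (p, q)" "p \<in> P" "q \<in> P" "fst q \<noteq> fst p" "fst q \<noteq> - fst p"
      unfolding Q_def by auto
    have "(uu z \<bullet> vv z)^2 < (uu z \<bullet> uu z) * (vv z \<bullet> vv z)"
      unfolding uu_def vv_def pq(1) using cs_pair[OF pq(2-5)] by simp
    then show "\<exists>K. \<forall>\<delta>>0. \<forall>\<alpha> \<beta>. measure lebesgue {y \<in> cball 0 R. \<alpha> < uu z \<bullet> y \<and> uu z \<bullet> y \<le> \<alpha> + \<delta> \<and> \<beta> < vv z \<bullet> y \<and> vv z \<bullet> y \<le> \<beta> + \<delta>} \<le> K * \<delta>^2"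
      by (rule slab2)
  qed
  then obtain Kf where Kf0: "\<forall>z\<in>Q. \<forall>\<delta>>0. \<forall>\<alpha> \<beta>. measure lebesgue {y \<in> cball 0 R. \<alpha> < uu z \<bullet> y \<and> uu z \<bullet> y \<le> \<alpha> + \<delta> \<and> \<beta> < vv z \<bullet> y \<and> vv z \<bullet> y \<le> \<beta> + \<delta>} \<le> Kf z * \<delta>^2"
    by (rule bchoice[THEN exE])
  note Kf = Kf0[rule_format]
  show ?thesis
  proof (rule exI[of _ "\<Sum>z\<in>Q. 16 * Kf z"], rule exI[of _ "min t (In - t)"], intro conjI allI impI)
    show "0 < min t (In - t)" using t In_def by simp
    fix \<delta> :: real assume d: "0 < \<delta> \<and> \<delta> < min t (In - t)"
    then have d1: "0 < \<delta>" "\<delta> < t" "\<delta> < In - t" by auto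
    define al where "al z = t - snd (fst z) - 4 * \<delta>" for z :: "('a \<times> real) \<times> ('a \<times> real)"
    define be where "be z = snd (fst z) - snd (snd z) - 2 * \<delta>" for z :: "('a \<times> real) \<times> ('a \<times> real)"
    define E where "E z = {y \<in> cball 0 R. al z < uu z \<bullet> y \<and> uu z \<bullet> y \<le> al z + 4 * \<delta> \<and> be z < vv z \<bullet> y \<and> vv z \<bullet> y \<le> be z + 4 * \<delta>}" for z
    define B where "B = Lev t - Lev (t - \<delta>)"
    define A where "A = Lev (t + \<delta>) - Lev t"
    define img where "img p = (+) (\<delta> *\<^sub>R fst p) ` (A \<inter> C p - NN)" for p
    have Asets: "A \<in> sets lebesgue" "A \<subseteq> Om" unfolding A_def using Sh_sets Lev_sub by auto
    have Bsets: "B \<in> sets lebesgue" "B \<subseteq> Om" unfolding B_def using Sh_sets Lev_sub by auto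
    have pieceA: "A \<inter> C p - NN \<in> lmeasurable" for p
    proof -
      have "A \<inter> C p - NN \<subseteq> Om" using Asets(2) by blast
      then show ?thesis using lm_sub[OF piece_sets[OF Asets(1), of p]] by blast
    qed
    have img_lm: "img p \<in> lmeasurable" for p unfolding img_def by (rule measurable_translation[OF pieceA])
    have E_lm: "E z \<in> lmeasurable" for z unfolding E_def by (rule slab2_lm)
    have incl: "B - NN \<subseteq> (\<Union>z\<in>Q. E z) \<union> (\<Union>p\<in>P. img p)"
    proof
      fix y assume y: "y \<in> B - NN"
      show "y \<in> (\<Union>z\<in>Q. E z) \<union> (\<Union>p\<in>P. img p)"
      proof (cases "y \<in> (\<Union>z\<in>Q. E z)")
        case True then show ?thesis by blast
      next
        case False
        have hy: "y \<in> Om" "t - \<delta> < hh y" "hh y \<le> t" "y \<notin> NN" using y unfolding B_def Lev_def by auto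
        obtain p where p: "p \<in> P" "hh y = ht p y" using hh_att by blast
        define x where "x = y - \<delta> *\<^sub>R fst p"
        have htx: "ht q x = ht q y + \<delta> * (fst q \<bullet> fst p)" for q unfolding x_def by (simp add: ht_diff)
        have hpx: "ht p x = ht p y + \<delta>" using htx[of p] dot_self[OF p(1)] by simp
        have strict: "ht p x < ht q x" if q: "q \<in> P" "q \<noteq> p" for q
        proof -
          have hq: "ht p y \<le> ht q y" using hh_le[OF q(1), of y] p by simp
          consider (eq) "fst q = fst p" | (ng) "fst q = - fst p" | (gen) "fst q \<noteq> fst p" "fst q \<noteq> - fst p" by blast
          then show ?thesis
          proof cases
            case eq
            then have sn: "snd q \<noteq> snd p" using q(2) by (auto simp: prod_eq_iff)
            have "ht q y - ht p y = snd q - snd p" unfolding ht_def using eq by simp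
            then have "snd q - snd p > 0" using hq sn by simp
            moreover have "ht q x - ht p x = snd q - snd p"
              using htx[of q] hpx eq dot_self[OF p(1)] unfolding ht_def by simp
            ultimately show ?thesis by simp
          next
            case ng
            have o: "2 * In \<le> snd p + snd q" using opp[OF p(1) q(1) ng] In_def by simp
            have sum: "ht q y + ht p y = snd p + snd q" unfolding ht_def using ng by simp
            have "ht q x - ht p x = ht q y - ht p y - 2 * \<delta>"
              using htx[of q] hpx ng dot_self[OF p(1)] by simp
            also have "\<dots> = snd p + snd q - 2 * ht p y - 2 * \<delta>" using sum by simp
            also have "\<dots> > 0" using o p hy d1 by simp
            finally show ?thesis by simp
          next
            case gen
            then have zQ: "(p, q) \<in> Q" unfolding Q_def using p q by auto
            then have nE: "y \<notin> E (p, q)" using False by blast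
            have yR: "y \<in> cball 0 R" using hy R by auto
            have u1: "uu (p,q) \<bullet> y = ht p y - snd p" unfolding uu_def ht_def by simp
            have v1: "vv (p,q) \<bullet> y = ht q y - ht p y + snd p - snd q" unfolding vv_def ht_def by (simp add: inner_diff_left)
            have ucond: "al (p,q) < uu (p,q) \<bullet> y \<and> uu (p,q) \<bullet> y \<le> al (p,q) + 4 * \<delta>"
              using u1 hy p d1 unfolding al_def by simp
            have vlow: "be (p,q) < vv (p,q) \<bullet> y" using v1 hq d1 unfolding be_def by simp
            have "\<not> vv (p,q) \<bullet> y \<le> be (p,q) + 4 * \<delta>" using nE ucond vlow yR unfolding E_def by auto
            then have big: "ht q y - ht p y > 2 * \<delta>" using v1 unfolding be_def by simp
            have cb: "-1 \<le> fst q \<bullet> fst p" using dot_bounds[OF p(1) q(1)] by simp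
            have "\<delta> * (-1) \<le> \<delta> * (fst q \<bullet> fst p)" using cb d1 by (intro mult_left_mono) auto
            then have "ht q x - ht p x \<ge> ht q y - ht p y - 2 * \<delta>" using htx[of q] hpx by simp
            then show ?thesis using big by simp
          qed
        qed
        have hhx: "hh x = ht p x"
        proof -
          have "ht p x \<le> hh x" unfolding hh_ge_iff
          proof
            fix q assume q: "q \<in> P"
            show "ht p x \<le> ht q x" using strict[OF q] by (cases "q = p") auto
          qed
          then show ?thesis using hh_le[OF p(1), of x] by simp
        qed
        have hx: "hh x = hh y + \<delta>" using hhx hpx p by simp
        have xOm: "x \<in> Om" using hx hy d1 Om_iff by simp
        have xA: "x \<in> A" unfolding A_def Lev_def using hx hy xOm by auto
        have xC: "x \<in> C p" unfolding C_def using hhx by simp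
        have xN: "x \<notin> NN"
        proof
          assume "x \<in> NN"
          then obtain q r where qr: "q \<in> P" "r \<in> P" "q \<noteq> r" "ht q x = hh x" "ht r x = hh x"
            unfolding NN_def by blast
          show False
          proof (cases "q = p")
            case True
            then have "r \<noteq> p" using qr by simp
            then show False using strict[OF qr(2)] qr(5) hhx by simp
          next
            case False
            then show False using strict[OF qr(1)] qr(4) hhx by simp
          qed
        qed
        have "y = \<delta> *\<^sub>R fst p + x" unfolding x_def by simp
        then have "y \<in> img p" unfolding img_def using xA xC xN by blast
        then show ?thesis using p(1) by blast
      qed
    qed
    have U_sets: "(\<Union>z\<in>Q. E z) \<in> sets lebesgue" "(\<Union>p\<in>P. img p) \<in> sets lebesgue"
      using finQ finP E_lm img_lm by (auto intro!: sets.finite_UN simp: fmeasurable_def)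
    have U_bnd: "(\<Union>z\<in>Q. E z) \<union> (\<Union>p\<in>P. img p) \<subseteq> cball 0 (R + \<delta>)"
    proof
      fix y assume "y \<in> (\<Union>z\<in>Q. E z) \<union> (\<Union>p\<in>P. img p)"
      then consider (e) z where "y \<in> E z" | (i) p where "p \<in> P" "y \<in> img p" by blast
      then show "y \<in> cball 0 (R + \<delta>)"
      proof cases
        case e then show ?thesis unfolding E_def using d1 by auto
      next
        case i
        then obtain x where x: "x \<in> A" "y = \<delta> *\<^sub>R fst p + x" unfolding img_def by auto
        then have "norm x \<le> R" using Asets(2) R by auto
        moreover have "norm y \<le> norm (\<delta> *\<^sub>R fst p) + norm x" unfolding x(2) by (rule norm_triangle_ineq)
        moreover have "norm (\<delta> *\<^sub>R fst p) = \<delta>" using unit[OF i(1)] d1 by simp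
        ultimately show ?thesis by simp
      qed
    qed
    have U_lm: "(\<Union>z\<in>Q. E z) \<union> (\<Union>p\<in>P. img p) \<in> lmeasurable"
      by (rule bounded_set_imp_lmeasurable[OF bounded_subset[OF bounded_cball U_bnd] sets.Un[OF U_sets]])
    have s1: "F t - F (t - \<delta>) = measure lebesgue B" unfolding B_def using F_diff[of "t - \<delta>" t] d1 by simp
    have s2: "measure lebesgue B = measure lebesgue (B - NN)" by (rule measure_Diff_null_set[OF Bsets(1) NN_null, symmetric])
    have s3: "measure lebesgue (B - NN) \<le> measure lebesgue ((\<Union>z\<in>Q. E z) \<union> (\<Union>p\<in>P. img p))"
      by (rule measure_mono_fmeasurable[OF incl sets.Diff[OF Bsets(1) null_setsD2[OF NN_null]] U_lm])
    have s4: "measure lebesgue ((\<Union>z\<in>Q. E z) \<union> (\<Union>p\<in>P. img p)) \<le> measure lebesgue (\<Union>z\<in>Q. E z) + measure lebesgue (\<Union>p\<in>P. img p)"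
      by (rule measure_Un_le[OF U_sets])
    have s5: "measure lebesgue (\<Union>z\<in>Q. E z) \<le> (\<Sum>z\<in>Q. measure lebesgue (E z))"
      using E_lm by (intro measure_UNION_le[OF finQ]) (auto simp: fmeasurable_def)
    have s6: "measure lebesgue (\<Union>p\<in>P. img p) \<le> (\<Sum>p\<in>P. measure lebesgue (img p))"
      using img_lm by (intro measure_UNION_le[OF finP]) (auto simp: fmeasurable_def)
    have s7: "(\<Sum>z\<in>Q. measure lebesgue (E z)) \<le> (\<Sum>z\<in>Q. 16 * Kf z * \<delta>^2)"
    proof (rule sum_mono)
      fix z assume z: "z \<in> Q"
      have "measure lebesgue (E z) \<le> Kf z * (4 * \<delta>)^2" unfolding E_def by (rule Kf[OF z]) (use d1 in simp)
      then show "measure lebesgue (E z) \<le> 16 * Kf z * \<delta>^2" by (simp add: power2_eq_square)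
    qed
    have s8: "(\<Sum>p\<in>P. measure lebesgue (img p)) = (\<Sum>p\<in>P. measure lebesgue (A \<inter> C p - NN))"
    proof (rule sum.cong)
      show "measure lebesgue (img p) = measure lebesgue (A \<inter> C p - NN)" for p
        unfolding img_def by (rule measure_translation)
    qed (rule refl)
    have s9: "(\<Sum>p\<in>P. measure lebesgue (A \<inter> C p - NN)) = measure lebesgue A" by (rule decomp[OF Asets, symmetric])
    have s10: "measure lebesgue A = F (t + \<delta>) - F t" unfolding A_def using F_diff[of t "t + \<delta>"] d1 by simp
    have s11: "(\<Sum>z\<in>Q. 16 * Kf z * \<delta>^2) = (\<Sum>z\<in>Q. 16 * Kf z) * \<delta>^2" by (simp add: sum_distrib_right)
    show "F t - F (t - \<delta>) \<le> F (t + \<delta>) - F t + (\<Sum>z\<in>Q. 16 * Kf z) * \<delta>\<^sup>2"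
      using s1 s2 s3 s4 s5 s6 s7 s8 s9 s10 s11 by linarith
  qed
qed

end


theorem mainTheorem5:
  fixes \<Omega> :: "'a::euclidean_space set"
  assumes "polytope \<Omega>" and "interior \<Omega> \<noteq> {}"
  shows "(\<exists>f'. (\<forall>\<epsilon>\<in>{0..inradius \<Omega>}.
              ((\<lambda>e. vol (inner_nbhd e \<Omega>)) has_real_derivative f' \<epsilon>)
                (at \<epsilon> within {0..inradius \<Omega>}))
           \<and> continuous_on {0..inradius \<Omega>} f'
           \<and> (\<forall>s\<in>{0..inradius \<Omega>}. \<forall>t\<in>{0..inradius \<Omega>}. s \<le> t \<longrightarrow> f' t \<le> f' s))
       \<and> concave_on {0..inradius \<Omega>} (\<lambda>e. vol (inner_nbhd e \<Omega>))
       \<and> (\<forall>\<epsilon>\<in>{0..inradius \<Omega>}.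
            vol (inner_nbhd \<epsilon> \<Omega>) \<ge> \<epsilon> * vol \<Omega> / inradius \<Omega>
          \<and> \<epsilon> * vol \<Omega> / inradius \<Omega> \<ge>
              vol \<Omega> * (1 - (1 - \<epsilon> / inradius \<Omega>) ^ DIM('a)) / real DIM('a))"
proof -
  have cpt: "compact \<Omega>" using assms(1) polytope_imp_compact by blast
  have "polyhedron \<Omega>" using assms(1) polytope_imp_polyhedron by blast
  then obtain Fs where Fs: "finite Fs" "\<Omega> = \<Inter> Fs" "\<forall>h\<in>Fs. \<exists>a b. a \<noteq> 0 \<and> h = {x. a \<bullet> x \<le> b}"
    unfolding polyhedron_def by blast
  have "\<forall>h\<in>Fs. \<exists>ab. fst ab \<noteq> 0 \<and> h = {x. fst ab \<bullet> x \<le> snd ab}" using Fs(3) by auto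
  then obtain g where g: "\<forall>h\<in>Fs. fst (g h) \<noteq> 0 \<and> h = {x. fst (g h) \<bullet> x \<le> snd (g h)}"
    by (rule bchoice[THEN exE])
  define nz where "nz ab = (fst ab /\<^sub>R norm (fst ab), snd ab / norm (fst ab))" for ab :: "'a \<times> real"
  define P where "P = (\<lambda>h. nz (g h)) ` Fs"
  have hs: "{x. fst ab \<bullet> x \<le> snd ab} = {x. fst (nz ab) \<bullet> x \<le> snd (nz ab)}" if "fst ab \<noteq> 0" for ab :: "'a \<times> real"
  proof -
    have n: "norm (fst ab) > 0" using that by simp
    have "fst ab \<bullet> x \<le> snd ab \<longleftrightarrow> (fst ab \<bullet> x) / norm (fst ab) \<le> snd ab / norm (fst ab)" for x
      using n by (simp add: divide_le_cancel)
    then show ?thesis unfolding nz_def by (simp add: divide_inverse mult.commute)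
  qed
  have Om_eq: "\<Omega> = {x. \<forall>p\<in>P. fst p \<bullet> x \<le> snd p}"
  proof -
    have "\<Omega> = \<Inter> Fs" by (rule Fs(2))
    also have "\<dots> = {x. \<forall>h\<in>Fs. fst (nz (g h)) \<bullet> x \<le> snd (nz (g h))}"
    proof -
      have "x \<in> h \<longleftrightarrow> fst (nz (g h)) \<bullet> x \<le> snd (nz (g h))" if "h \<in> Fs" for x h
        using g that hs[of "g h"] by blast
      then show ?thesis by blast
    qed
    also have "\<dots> = {x. \<forall>p\<in>P. fst p \<bullet> x \<le> snd p}" unfolding P_def by auto
    finally show ?thesis .
  qed
  have finP: "finite P" unfolding P_def using Fs(1) by simp
  have neP: "P \<noteq> {}"
  proof
    assume "P = {}"
    then have "\<Omega> = UNIV" using Om_eq by simp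
    then show False using compact_imp_bounded[OF cpt] not_bounded_UNIV by simp
  qed
  have unit: "norm (fst p) = 1" if "p \<in> P" for p
    using that g unfolding P_def nz_def by auto
  interpret prep P \<Omega>
    by unfold_locales (use finP neP unit Om_eq compact_imp_bounded[OF cpt] assms(2) in auto)
  define In where "In = inradius \<Omega>"
  have fun_eq: "(\<lambda>e. vol (inner_nbhd e \<Omega>)) = F"
    by (rule ext) (simp add: vol_def inner_eq F_def Lev_def)
  obtain K1 where K1: "\<And>\<delta>. 0 \<le> \<delta> \<Longrightarrow> F \<delta> - F 0 \<le> K1 * \<delta>" using F_P3 by blast
  have main: "(\<exists>f'. (\<forall>\<epsilon>\<in>{0..In}. (F has_real_derivative f' \<epsilon>) (at \<epsilon> within {0..In}))
           \<and> continuous_on {0..In} f'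
           \<and> (\<forall>s\<in>{0..In}. \<forall>t\<in>{0..In}. s \<le> t \<longrightarrow> f' t \<le> f' s))
         \<and> concave_on {0..In} F"
  proof (rule analysis_main[of In F K1])
    show "0 < In" unfolding In_def by (rule In_pos)
    show "F s \<le> F t" if "0 \<le> s" "s \<le> t" "t \<le> In" for s t using F_mono that by simp
    show "F (t' + \<delta>) - F t' \<le> F (t + \<delta>) - F t" if "0 \<le> t" "t \<le> t'" "0 \<le> \<delta>" "t' + \<delta> \<le> In" for t t' \<delta>
      using F_P1 that by simp
    show "F \<delta> - F 0 \<le> K1 * \<delta>" if "0 \<le> \<delta>" "\<delta> \<le> In" for \<delta> using K1 that by simp
    show "\<exists>K d. d > 0 \<and> (\<forall>\<delta>. 0 < \<delta> \<and> \<delta> < d \<longrightarrow> F t - F (t-\<delta>) \<le> F (t+\<delta>) - F t + K * \<delta>^2)"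
      if "0 < t" "t < In" for t using F_P2 that In_def by simp
  qed
  have In0: "0 < In" unfolding In_def by (rule In_pos)
  have FIn: "F In = vol \<Omega>"
  proof -
    have "Lev In = \<Omega>" unfolding Lev_def In_def using In_upper by auto
    then show ?thesis unfolding F_def vol_def by simp
  qed
  have ineq: "\<epsilon> * vol \<Omega> / In \<le> F \<epsilon> \<and> vol \<Omega> * (1 - (1 - \<epsilon> / In) ^ DIM('a)) / real DIM('a) \<le> \<epsilon> * vol \<Omega> / In"
    if e: "\<epsilon> \<in> {0..In}" for \<epsilon>
  proof
    define u where "u = \<epsilon> / In"
    have u: "0 \<le> u" "u \<le> 1" using e In0 unfolding u_def by auto
    have cc: "concave_on {0..In} F" using main by blast
    have "(1 - u) * F 0 + u * F In \<le> F ((1 - u) *\<^sub>R 0 + u *\<^sub>R In)"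
      by (rule concave_onD[OF cc]) (use u In0 in auto)
    moreover have "(1 - u) *\<^sub>R 0 + u *\<^sub>R In = \<epsilon>" unfolding u_def using In0 by simp
    ultimately have "u * vol \<Omega> \<le> F \<epsilon>" using F0 FIn by simp
    then show "\<epsilon> * vol \<Omega> / In \<le> F \<epsilon>" unfolding u_def by simp
    have vpos: "0 \<le> vol \<Omega>" unfolding vol_def by simp
    have "1 + real DIM('a) * (- u) \<le> (1 + - u) ^ DIM('a)" using u by (intro Bernoulli_inequality) simp
    then have b: "1 - (1 - u) ^ DIM('a) \<le> real DIM('a) * u" by simp
    have "vol \<Omega> * (1 - (1 - u) ^ DIM('a)) \<le> vol \<Omega> * (real DIM('a) * u)"
      using b vpos by (rule mult_left_mono)
    then have "vol \<Omega> * (1 - (1 - u) ^ DIM('a)) / real DIM('a) \<le> vol \<Omega> * (real DIM('a) * u) / real DIM('a)"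
      by (rule divide_right_mono) simp
    also have "\<dots> = u * vol \<Omega>" by simp
    finally show "vol \<Omega> * (1 - (1 - \<epsilon> / In) ^ DIM('a)) / real DIM('a) \<le> \<epsilon> * vol \<Omega> / In"
      unfolding u_def by simp
  qed
  have fe: "vol (inner_nbhd e \<Omega>) = F e" for e using fun_eq by (rule fun_cong)
  show ?thesis unfolding fun_eq fe In_def[symmetric] using main ineq by auto
qed


end
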